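(* Let $f\ge 2$, $q=p^f$, and let $r=r_0+r_1p+\cdots+r_{f-1}p^{f-1}$ with integers $r_j\ge q$ for all $0\le j\le f-1$ and $r$ divisible by $q-1$. Let $W=\bigotimes_{j=0}^{f-1}V_{r_j}^{\mathrm{Fr}^j}$ and $\overline W = W/\langle\theta_0,\dots,\theta_{f-1}\rangle$. Define linear maps $\iota_0:\bigotimes_{j=0}^{f-1}V_0^{\mathrm{Fr}^j}\to \overline W$ by \[ 1\mapsto \prod_{j}X_j^{r_j}-\prod_j X_j^{r_j-(p-1)}Y_j^{p-1}+\prod_j Y_j^{r_j}, \] and $\iota_{p-1}:\bigotimes_{j=0}^{f-1}V_{p-1}^{\mathrm{Fr}^j}\to\overline W$ on monomials by \[ \prod_j X_j^{p-1-i_j}Y_j^{i_j}\mapsto \prod_j X_j^{r_j-i_j}Y_j^{i_j}\quad\text{if }(i_0,\dots,i_{f-1})\ne(p-1,\dots,p-1),\qquad \prod_j Y_j^{p-1}\mapsto \prod_jY_j^{r_j} \] (with $0\le i_j\le p-1$). Then $\iota_0$ and $\iota_{p-1}$ are $\mathrm{GL}_2(\mathbb{F}_q)$-equivariant and together induce an isomorphism of $\mathrm{GL}_2(\mathbb{F}_q)$-representations \[ \iota_0\oplus\iota_{p-1}:\ \bigotimes_{j=0}^{f-1}V_0^{\mathrm{Fr}^j}\ \oplus\ \bigotimes_{j=0}^{f-1}V_{p-1}^{\mathrm{Fr}^j}\ \xrightarrow{\ \sim\ }\ \overline W . \]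
   Context: $p$ is a prime, $\mathbb{F}_q$ the field with $q=p^f$ elements, and all representations are over $\overline{\mathbb{F}}_p$ (with a fixed embedding $\mathbb{F}_q\hookrightarrow\overline{\mathbb{F}}_p$). For an integer $n\ge0$ and $0\le j\le f-1$, $V_n^{\mathrm{Fr}^j}$ denotes the space of homogeneous polynomials of degree $n$ in variables $X_j,Y_j$, on which $g=\begin{pmatrix}a&b\\c&d\end{pmatrix}\in\mathrm{GL}_2(\mathbb{F}_q)$ acts by $(g\cdot P)(X_j,Y_j)=P(a^{p^j}X_j+c^{p^j}Y_j,\ b^{p^j}X_j+d^{p^j}Y_j)$; tensor products carry the diagonal action, so $\bigotimes_j V_{n_j}^{\mathrm{Fr}^j}$ is identified with polynomials in $X_0,Y_0,\dots,X_{f-1},Y_{f-1}$ homogeneous of degree $n_j$ in $(X_j,Y_j)$ for each $j$. In particular $\bigotimes_j V_0^{\mathrm{Fr}^j}$ is the trivial representation. For $j\in\mathbb{Z}/f\mathbb{Z}$, $\theta_j=X_jY_{j-1}^p-Y_jX_{j-1}^p$, and $\langle\theta_0,\dots,\theta_{f-1}\rangle$ denotes the subrepresentation of $W$ consisting of elements of $W$ lying in the ideal generated by $\theta_0,\dots,\theta_{f-1}$ in the polynomial ring. *)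

theory Defs
  imports Main "HOL-Library.Poly_Mapping" "HOL-Computational_Algebra.Polynomial"
begin

text \<open>Polynomials over a field 'k in the variables X_j = (j,False), Y_j = (j,True):
  finitely supported maps from monomials (exponent vectors) to coefficients,
  with convolution multiplication (library instance of poly_mapping).\<close>
type_synonym 'k mpoly = "((nat \<times> bool) \<Rightarrow>\<^sub>0 nat) \<Rightarrow>\<^sub>0 'k"

definition const :: "'k::comm_ring_1 \<Rightarrow> 'k mpoly" where
  "const c = Poly_Mapping.single 0 c"

definition var :: "nat \<times> bool \<Rightarrow> 'k::comm_ring_1 mpoly" where
  "var v = Poly_Mapping.single (Poly_Mapping.single v 1) 1"

definition Xv :: "nat \<Rightarrow> 'k::comm_ring_1 mpoly" where "Xv j = var (j, False)"
definition Yv :: "nat \<Rightarrow> 'k::comm_ring_1 mpoly" where "Yv j = var (j, True)"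

definition subst :: "(nat \<times> bool \<Rightarrow> 'k::comm_ring_1 mpoly) \<Rightarrow> 'k mpoly \<Rightarrow> 'k mpoly" where
  "subst \<sigma> P = (\<Sum>m\<in>Poly_Mapping.keys P. const (Poly_Mapping.lookup P m) * (\<Prod>v\<in>Poly_Mapping.keys m. \<sigma> v ^ Poly_Mapping.lookup m v))"

text \<open>Action of g = (a b; c d) on the tensor product (j ranges over 0..f-1):
  X_j \<mapsto> a^(p^j) X_j + c^(p^j) Y_j,  Y_j \<mapsto> b^(p^j) X_j + d^(p^j) Y_j.\<close>
definition act :: "nat \<Rightarrow> nat \<Rightarrow> 'k::comm_ring_1 \<Rightarrow> 'k \<Rightarrow> 'k \<Rightarrow> 'k \<Rightarrow> 'k mpoly \<Rightarrow> 'k mpoly" where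
  "act p f a b c d P = subst (\<lambda>(j, isY).
     if j < f then
       (if \<not> isY then const (a ^ (p ^ j)) * Xv j + const (c ^ (p ^ j)) * Yv j
        else const (b ^ (p ^ j)) * Xv j + const (d ^ (p ^ j)) * Yv j)
     else var (j, isY)) P"

definition Fq :: "nat \<Rightarrow> 'k::field set" where
  "Fq q = {x. x ^ q = x}"

definition GL2 :: "nat \<Rightarrow> ('k::field \<times> 'k \<times> 'k \<times> 'k) set" where
  "GL2 q = {(a, b, c, d). a \<in> Fq q \<and> b \<in> Fq q \<and> c \<in> Fq q \<and> d \<in> Fq q \<and> a * d - b * c \<noteq> 0}"

text \<open>The space \<Otimes>_j V_{n_j}^{Fr^j}: polynomials homogeneous of degree n j in (X_j,Y_j)
  for each j < f and involving no other variables.\<close>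
definition tens :: "nat \<Rightarrow> (nat \<Rightarrow> nat) \<Rightarrow> 'k::comm_ring_1 mpoly set" where
  "tens f n = {P. \<forall>m\<in>Poly_Mapping.keys P. (\<forall>j<f. Poly_Mapping.lookup m (j, False) + Poly_Mapping.lookup m (j, True) = n j)
                              \<and> (\<forall>j b. f \<le> j \<longrightarrow> Poly_Mapping.lookup m (j, b) = 0)}"

definition theta :: "nat \<Rightarrow> nat \<Rightarrow> nat \<Rightarrow> 'k::comm_ring_1 mpoly" where
  "theta p f j = Xv j * Yv ((j + f - 1) mod f) ^ p - Yv j * Xv ((j + f - 1) mod f) ^ p"

definition in_theta_ideal :: "nat \<Rightarrow> nat \<Rightarrow> 'k::comm_ring_1 mpoly \<Rightarrow> bool" where
  "in_theta_ideal p f P \<longleftrightarrow> (\<exists>c :: nat \<Rightarrow> 'k mpoly. P = (\<Sum>j<f. c j * theta p f j))"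

definition lin_ext :: "(((nat \<times> bool) \<Rightarrow>\<^sub>0 nat) \<Rightarrow> 'k::comm_ring_1 mpoly) \<Rightarrow> 'k mpoly \<Rightarrow> 'k mpoly" where
  "lin_ext img Q = (\<Sum>m\<in>Poly_Mapping.keys Q. const (Poly_Mapping.lookup Q m) * img m)"

text \<open>iota_0 (lifted to W): 1 \<mapsto> prod X^r - prod X^(r-(p-1)) Y^(p-1) + prod Y^r.\<close>
definition iota0 :: "nat \<Rightarrow> nat \<Rightarrow> (nat \<Rightarrow> nat) \<Rightarrow> 'k::comm_ring_1 mpoly \<Rightarrow> 'k mpoly" where
  "iota0 p f r = lin_ext (\<lambda>m.
      (\<Prod>j<f. Xv j ^ r j) - (\<Prod>j<f. Xv j ^ (r j - (p - 1)) * Yv j ^ (p - 1)) + (\<Prod>j<f. Yv j ^ r j))"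

text \<open>iota_{p-1} (lifted to W), on monomials prod X_j^(p-1-i_j) Y_j^(i_j).\<close>
definition iota1 :: "nat \<Rightarrow> nat \<Rightarrow> (nat \<Rightarrow> nat) \<Rightarrow> 'k::comm_ring_1 mpoly \<Rightarrow> 'k mpoly" where
  "iota1 p f r = lin_ext (\<lambda>m.
      if (\<forall>j<f. Poly_Mapping.lookup m (j, True) = p - 1) then (\<Prod>j<f. Yv j ^ r j)
      else (\<Prod>j<f. Xv j ^ (r j - Poly_Mapping.lookup m (j, True)) * Yv j ^ Poly_Mapping.lookup m (j, True)))"

end

theory Submission
  imports Defs "HOL-Computational_Algebra.Primes"
begin

lemma prod_lin_dvd:
  fixes R :: "'k::field poly"
  assumes "finite T" "\<forall>t\<in>T. poly R t = 0"
  shows "(\<Prod>t\<in>T. [:-t,1:]) dvd R"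
  using assms
proof (induction T arbitrary: R rule: finite_induct)
  case empty then show ?case by simp
next
  case (insert a T)
  then obtain R1 where R1: "R = (\<Prod>t\<in>T. [:-t,1:]) * R1" by (meson dvd_def insert_iff)
  have "poly (\<Prod>t\<in>T. [:-t,1:]) a \<noteq> 0"
    using insert(2) by (simp add: poly_prod prod_zero_iff[OF insert(1)])
  moreover have "poly R a = 0" using insert by simp
  ultimately have "poly R1 a = 0" using R1 by simp
  then have "[:-a,1:] dvd R1" by (simp add: poly_eq_0_iff_dvd)
  then obtain R2 where R2: "R1 = [:-a,1:] * R2" by (auto elim: dvdE)
  have "R = (\<Prod>t\<in>insert a T. [:-t,1:]) * R2"
    unfolding prod.insert[OF insert(1,2)] R1 R2 by (simp only: mult_ac)
  then show ?case by (rule dvdI)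
qed

lemma Fq_finite_card:
  assumes pr: "prime p" and ch: "CHAR('k::field) = p" and qd: "q = p ^ f" and f1: "1 \<le> f"
    and ac: "\<forall>P :: 'k poly. 0 < degree P \<longrightarrow> (\<exists>x. poly P x = 0)"
  shows "finite (Fq q :: 'k set) \<and> q \<le> card (Fq q :: 'k set)"
proof -
  define P0 :: "'k poly" where "P0 = monom 1 q - [:0,1:]"
  have q2: "2 \<le> q"
  proof -
    have "p \<le> p ^ f" using f1 pr by (cases f) (auto simp: prime_gt_0_nat Suc_le_eq)
    then show ?thesis using qd prime_ge_2_nat[OF pr] by linarith
  qed
  have dP0: "degree P0 = q" unfolding P0_def diff_conv_add_uminus using q2
    by (subst degree_add_eq_left) (auto simp: degree_monom_eq)
  have P0nz: "P0 \<noteq> 0" using dP0 q2 by auto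
  have roots: "Fq q = {x. poly P0 x = 0}" by (auto simp: Fq_def P0_def poly_monom)
  have fin: "finite (Fq q :: 'k set)" unfolding roots by (rule poly_roots_finite[OF P0nz])
  have charq: "of_nat q = (0::'k)"
    using f1 qd ch by (simp add: of_nat_eq_0_iff_char_dvd)
  have dP: "pderiv P0 = [:-1:]" unfolding P0_def
    by (simp add: pderiv_diff pderiv_monom charq pderiv_pCons)
  have "q \<le> card (Fq q :: 'k set)"
  proof (rule ccontr)
    assume lt: "\<not> q \<le> card (Fq q :: 'k set)"
    define Pi where "Pi = (\<Prod>t\<in>Fq q. [:-t,1::'k:])"
    have "Pi dvd P0" unfolding Pi_def by (rule prod_lin_dvd[OF fin]) (simp add: roots)
    then obtain R0 where R0: "P0 = Pi * R0" by (auto elim: dvdE)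
    have dPi: "degree Pi = card (Fq q :: 'k set)" unfolding Pi_def
      by (subst degree_prod_eq_sum_degree) auto
    have "R0 \<noteq> 0" using R0 P0nz by auto
    moreover have "Pi \<noteq> 0" using R0 P0nz by auto
    ultimately have "degree P0 = degree Pi + degree R0" using R0 degree_mult_eq by blast
    then have "0 < degree R0" using dP0 dPi lt by linarith
    then obtain a where a: "poly R0 a = 0" using ac by blast
    then have "poly P0 a = 0" using R0 by simp
    then have "a \<in> Fq q" using roots by simp
    then have "[:-a,1:] dvd Pi" unfolding Pi_def using fin by (intro dvd_prodI)
    then obtain Pi1 where Pi1: "Pi = [:-a,1:] * Pi1" by (auto elim: dvdE)
    obtain R1 where R1: "R0 = [:-a,1:] * R1" using a by (auto simp: poly_eq_0_iff_dvd elim: dvdE)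
    have "P0 = [:-a,1:] * ([:-a,1:] * (Pi1 * R1))" using R0 Pi1 R1 by (simp only: mult_ac)
    moreover have ha: "poly [:-a,1:] a = 0" by simp
    ultimately have "poly (pderiv P0) a = 0"
      by (simp only: pderiv_mult poly_add poly_mult ha mult_zero_left mult_zero_right add_0)
    then show False using dP by simp
  qed
  then show ?thesis using fin by simp
qed

lemma Fq_poly_zero:
  assumes pr: "prime p" and ch: "CHAR('k::field) = p" and qd: "q = p ^ f" and f1: "1 \<le> f"
    and ac: "\<forall>P :: 'k poly. 0 < degree P \<longrightarrow> (\<exists>x. poly P x = 0)"
    and dR: "degree R < q" and z: "\<forall>t\<in>Fq q. poly (R::'k poly) t = 0"
  shows "R = 0"
proof (rule ccontr)
  assume "R \<noteq> 0"
  then have "card {x. poly R x = 0} \<le> degree R" by (rule card_poly_roots_bound)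
  moreover have "card (Fq q :: 'k set) \<le> card {x. poly R x = 0}"
    using \<open>R \<noteq> 0\<close> z by (intro card_mono poly_roots_finite) auto
  ultimately show False using Fq_finite_card[OF assms(1-5)] dR by linarith
qed

abbreviation lk where "lk \<equiv> Poly_Mapping.lookup"
abbreviation ks where "ks \<equiv> Poly_Mapping.keys"
abbreviation sg where "sg \<equiv> Poly_Mapping.single"

definition mon :: "(nat \<times> bool \<Rightarrow> 'k::comm_ring_1) \<Rightarrow> ((nat \<times> bool) \<Rightarrow>\<^sub>0 nat) \<Rightarrow> 'k" where
  "mon \<tau> m = (\<Prod>v\<in>ks m. \<tau> v ^ lk m v)"

definition ev :: "(nat \<times> bool \<Rightarrow> 'k::comm_ring_1) \<Rightarrow> 'k mpoly \<Rightarrow> 'k" where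
  "ev \<tau> P = (\<Sum>m\<in>ks P. lk P m * mon \<tau> m)"

lemma mon_superset: "finite S \<Longrightarrow> ks m \<subseteq> S \<Longrightarrow> mon \<tau> m = (\<Prod>v\<in>S. \<tau> v ^ lk m v)"
  unfolding mon_def by (rule prod.mono_neutral_left) (auto simp: in_keys_iff)

lemma mon_add: "mon \<tau> (a + b) = mon \<tau> a * mon \<tau> b"
proof -
  let ?S = "ks a \<union> ks b"
  have "mon \<tau> (a + b) = (\<Prod>v\<in>?S. \<tau> v ^ lk (a + b) v)"
    by (rule mon_superset) (auto dest: subsetD[OF keys_add])
  also have "\<dots> = (\<Prod>v\<in>?S. \<tau> v ^ lk a v) * (\<Prod>v\<in>?S. \<tau> v ^ lk b v)"
    by (simp add: lookup_add power_add prod.distrib)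
  also have "\<dots> = mon \<tau> a * mon \<tau> b"
    by (simp add: mon_superset[of "ks a \<union> ks b" a \<tau>] mon_superset[of "ks a \<union> ks b" b \<tau>])
  finally show ?thesis .
qed

lemma mon_zero [simp]: "mon \<tau> 0 = 1" by (simp add: mon_def)

lemma mon_single [simp]: "mon \<tau> (sg v n) = \<tau> v ^ n"
  by (simp add: mon_def)

lemma ev_superset: "finite S \<Longrightarrow> ks P \<subseteq> S \<Longrightarrow> ev \<tau> P = (\<Sum>m\<in>S. lk P m * mon \<tau> m)"
  unfolding ev_def by (rule sum.mono_neutral_left) (auto simp: in_keys_iff)

lemma ev_add: "ev \<tau> (P + Q) = ev \<tau> P + ev \<tau> Q"
proof -
  let ?S = "ks P \<union> ks Q"
  have "ev \<tau> (P + Q) = (\<Sum>m\<in>?S. lk (P + Q) m * mon \<tau> m)"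
    by (rule ev_superset) (auto dest: subsetD[OF keys_add])
  also have "\<dots> = (\<Sum>m\<in>?S. lk P m * mon \<tau> m) + (\<Sum>m\<in>?S. lk Q m * mon \<tau> m)"
    by (simp add: lookup_add distrib_right sum.distrib)
  also have "\<dots> = ev \<tau> P + ev \<tau> Q"
    by (simp add: ev_superset[of "ks P \<union> ks Q" P \<tau>] ev_superset[of "ks P \<union> ks Q" Q \<tau>])
  finally show ?thesis .
qed

lemma ev_zero [simp]: "ev \<tau> 0 = 0" by (simp add: ev_def)

lemma ev_uminus: "ev \<tau> (- P) = - ev \<tau> P"
  by (simp add: ev_def sum_negf)

lemma ev_diff: "ev \<tau> (P - Q) = ev \<tau> P - ev \<tau> Q"
  using ev_add[of \<tau> P "- Q"] by (simp add: ev_uminus)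

lemma ev_sum: "ev \<tau> (\<Sum>i\<in>A. F i) = (\<Sum>i\<in>A. ev \<tau> (F i))"
  by (induction A rule: infinite_finite_induct) (auto simp: ev_add)

lemma ev_single: "ev \<tau> (sg m c) = c * mon \<tau> m"
  by (simp add: ev_def)

lemma mpoly_expand: "P = (\<Sum>m\<in>ks P. sg m (lk P m))"
proof (rule poly_mapping_eqI)
  fix k
  have "lk (\<Sum>m\<in>ks P. sg m (lk P m)) k = (\<Sum>m\<in>ks P. if m = k then lk P m else 0)"
    by (simp add: lookup_sum lookup_single when_def)
  also have "\<dots> = lk P k" by (simp add: sum.delta in_keys_iff)
  finally show "lk P k = lk (\<Sum>m\<in>ks P. sg m (lk P m)) k" by simp
qed

lemma ev_mult: "ev \<tau> (P * Q) = ev \<tau> P * ev \<tau> Q"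
proof -
  have "P * Q = (\<Sum>m\<in>ks P. sg m (lk P m)) * (\<Sum>m'\<in>ks Q. sg m' (lk Q m'))"
    by (simp flip: mpoly_expand)
  also have "\<dots> = (\<Sum>m\<in>ks P. \<Sum>m'\<in>ks Q. sg (m + m') (lk P m * lk Q m'))"
    by (simp add: sum_product mult_single)
  finally have "ev \<tau> (P * Q) = (\<Sum>m\<in>ks P. \<Sum>m'\<in>ks Q. (lk P m * mon \<tau> m) * (lk Q m' * mon \<tau> m'))"
    by (simp add: ev_sum ev_single mon_add mult_ac)
  also have "\<dots> = ev \<tau> P * ev \<tau> Q" by (simp add: ev_def sum_product)
  finally show ?thesis .
qed

lemma ev_const [simp]: "ev \<tau> (const c) = c"
  by (simp add: const_def ev_single)

lemma ev_one [simp]: "ev \<tau> 1 = 1"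
  using ev_const[of \<tau> 1] by (simp add: const_def)

lemma ev_var [simp]: "ev \<tau> (var v) = \<tau> v"
  by (simp add: var_def ev_single)

lemma ev_power: "ev \<tau> (P ^ n) = ev \<tau> P ^ n"
  by (induction n) (auto simp: ev_mult)

lemma ev_prod: "ev \<tau> (\<Prod>i\<in>A. F i) = (\<Prod>i\<in>A. ev \<tau> (F i))"
  by (induction A rule: infinite_finite_induct) (auto simp: ev_mult)

lemma ev_subst: "ev \<tau> (subst \<sigma> P) = ev (\<lambda>v. ev \<tau> (\<sigma> v)) P"
  unfolding subst_def
  by (simp add: ev_sum ev_mult ev_prod ev_power ev_def[of "\<lambda>v. ev \<tau> (\<sigma> v)"] mon_def)

lemma lookup_const_mult: "lk (const c * P) m = c * lk P m"
  by (simp add: const_def flip: mult_map_scale_conv_mult) (simp add: map.rep_eq when_def)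

lemma keys_const_mult: "ks (const c * P) \<subseteq> ks P"
  by (auto simp: in_keys_iff lookup_const_mult)

lemma const_add: "const (a + b) = const a + const b" by (simp add: const_def single_add)
lemma const_mult: "const (a * b) = const a * const b" by (simp add: const_def mult_single)
lemma const_0 [simp]: "const 0 = 0" by (simp add: const_def)
lemma const_1 [simp]: "const 1 = 1" by (simp add: const_def)
lemma const_uminus: "const (- a) = - const a" by (simp add: const_def single_uminus)

lemma var_power: "var v ^ n = sg (sg v n) 1"
  by (induction n) (auto simp: var_def mult_single simp flip: single_add)

lemma prod_single1: "(\<Prod>i\<in>A. sg (g i) (1::'k::comm_ring_1)) = sg (\<Sum>i\<in>A. g i) 1"
  by (induction A rule: infinite_finite_induct) (auto simp: mult_single)

definition dg :: "nat \<Rightarrow> (nat \<Rightarrow> nat) \<Rightarrow> ((nat \<times> bool) \<Rightarrow>\<^sub>0 nat) \<Rightarrow> bool" where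
  "dg f n m \<longleftrightarrow> (\<forall>j<f. lk m (j, False) + lk m (j, True) = n j) \<and> (\<forall>j b. f \<le> j \<longrightarrow> lk m (j, b) = 0)"

lemma tens_iff: "P \<in> tens f n \<longleftrightarrow> (\<forall>m\<in>ks P. dg f n m)"
  by (simp add: tens_def dg_def)

lemma tens_zero [simp]: "0 \<in> tens f n" by (simp add: tens_iff)

lemma tens_add: "P \<in> tens f n \<Longrightarrow> Q \<in> tens f n \<Longrightarrow> P + Q \<in> tens f n"
  unfolding tens_iff by (auto dest: subsetD[OF keys_add])

lemma tens_uminus: "P \<in> tens f n \<Longrightarrow> - P \<in> tens f n"
  unfolding tens_iff by simp

lemma tens_diff: "P \<in> tens f n \<Longrightarrow> Q \<in> tens f n \<Longrightarrow> P - Q \<in> tens f n"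
  using tens_add[of P f n "- Q"] tens_uminus by auto

lemma tens_sum: "(\<And>i. i \<in> A \<Longrightarrow> F i \<in> tens f n) \<Longrightarrow> (\<Sum>i\<in>A. F i) \<in> tens f n"
  by (induction A rule: infinite_finite_induct) (auto intro: tens_add)

lemma tens_const_mult: "P \<in> tens f n \<Longrightarrow> const c * P \<in> tens f n"
  unfolding tens_iff by (auto dest: subsetD[OF keys_const_mult])

lemma tens_single: "dg f n m \<Longrightarrow> sg m c \<in> tens f n"
  by (simp add: tens_iff)

lemma tens_cong: "(\<And>j. j < f \<Longrightarrow> n j = n' j) \<Longrightarrow> tens f n = tens f n'"
  by (simp add: tens_def)

lemma tens_mult:
  assumes "P \<in> tens f n1" "Q \<in> tens f n2"
  shows "P * Q \<in> tens f (\<lambda>j. n1 j + n2 j)"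
  unfolding tens_iff
proof
  fix m assume "m \<in> ks (P * Q)"
  then have "m \<in> {a + b |a b. a \<in> ks P \<and> b \<in> ks Q}" using keys_mult by (rule subsetD[rotated])
  then obtain a b where "m = a + b" "a \<in> ks P" "b \<in> ks Q" by auto
  moreover have "dg f n1 a" "dg f n2 b" using assms \<open>a \<in> ks P\<close> \<open>b \<in> ks Q\<close> by (auto simp: tens_iff)
  ultimately show "dg f (\<lambda>j. n1 j + n2 j) m"
    unfolding dg_def
  proof (intro conjI allI impI)
    fix j assume j: "j < f"
    have "lk a (j, False) + lk a (j, True) = n1 j" "lk b (j, False) + lk b (j, True) = n2 j"
      using \<open>dg f n1 a\<close> \<open>dg f n2 b\<close> j unfolding dg_def by blast+
    then show "lk m (j, False) + lk m (j, True) = n1 j + n2 j"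
      using \<open>m = a + b\<close> by (simp add: lookup_add)
  next
    fix j b' assume j: "f \<le> j"
    have "lk a (j, b') = 0" "lk b (j, b') = 0"
      using \<open>dg f n1 a\<close> \<open>dg f n2 b\<close> j unfolding dg_def by blast+
    then show "lk m (j, b') = 0" using \<open>m = a + b\<close> by (simp add: lookup_add)
  qed
qed

lemma tens_const: "const c \<in> tens f (\<lambda>_. 0)"
  by (simp add: const_def tens_single dg_def)

lemma tens_power: "P \<in> tens f n \<Longrightarrow> P ^ e \<in> tens f (\<lambda>j. e * n j)"
proof (induction e)
  case 0 then show ?case using tens_const[of 1 f] by simp
next
  case (Suc e)
  then show ?case using tens_mult[OF Suc.prems Suc.IH[OF Suc.prems]] by simp
qed

lemma tens_prod:
  assumes "finite A" "\<And>i. i \<in> A \<Longrightarrow> F i \<in> tens f (n i)"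
  shows "(\<Prod>i\<in>A. F i) \<in> tens f (\<lambda>j. \<Sum>i\<in>A. n i j)"
  using assms
proof (induction A rule: finite_induct)
  case empty then show ?case using tens_const[of 1 f] by simp
next
  case (insert a A)
  then show ?case using tens_mult[of "F a" f "n a" "\<Prod>i\<in>A. F i" "\<lambda>j. \<Sum>i\<in>A. n i j"] by simp
qed

lemma tens_var: "j < f \<Longrightarrow> var (j, b) \<in> tens f (\<lambda>i. if i = j then 1 else 0)"
  unfolding var_def by (rule tens_single) (cases b; auto simp: dg_def lookup_single when_def)

lemma tens_X: "j < f \<Longrightarrow> Xv j \<in> tens f (\<lambda>i. if i = j then 1 else 0)"
  by (simp add: Xv_def tens_var)
lemma tens_Y: "j < f \<Longrightarrow> Yv j \<in> tens f (\<lambda>i. if i = j then 1 else 0)"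
  by (simp add: Yv_def tens_var)

lemma tens_lin: "j < f \<Longrightarrow> const a * Xv j + const b * Yv j \<in> tens f (\<lambda>i. if i = j then 1 else 0)"
  by (intro tens_add tens_const_mult tens_X tens_Y)

lemma prod_keys_split:
  fixes F :: "nat \<times> bool \<Rightarrow> 'a::comm_monoid_mult"
  assumes "\<forall>j b. f \<le> j \<longrightarrow> lk m (j, b) = 0"
  shows "(\<Prod>v\<in>ks m. F v ^ lk m v) = (\<Prod>j<f. F (j, False) ^ lk m (j, False) * F (j, True) ^ lk m (j, True))"
proof -
  have sub: "ks m \<subseteq> {..<f} \<times> UNIV"
  proof
    fix v assume v: "v \<in> ks m"
    obtain j b where vj: "v = (j, b)" by (cases v)
    have "lk m (j, b) \<noteq> 0" using v vj by (simp add: in_keys_iff)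
    then have "j < f" using assms not_less by blast
    then show "v \<in> {..<f} \<times> UNIV" using vj by simp
  qed
  have "(\<Prod>v\<in>ks m. F v ^ lk m v) = (\<Prod>v\<in>{..<f} \<times> UNIV. F v ^ lk m v)"
  proof (rule prod.mono_neutral_left)
    show "\<forall>i\<in>{..<f} \<times> UNIV - ks m. F i ^ lk m i = 1"
      by (simp add: in_keys_iff)
  qed (use sub in simp_all)
  also have "\<dots> = (\<Prod>z\<in>{..<f} \<times> UNIV. case z of (j, b) \<Rightarrow> F (j, b) ^ lk m (j, b))"
    by (intro prod.cong refl) (simp add: split_beta)
  also have "\<dots> = (\<Prod>j<f. \<Prod>b\<in>UNIV. F (j, b) ^ lk m (j, b))"
    by (rule prod.cartesian_product[symmetric])
  also have "\<dots> = (\<Prod>j<f. F (j, False) ^ lk m (j, False) * F (j, True) ^ lk m (j, True))"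
    by (intro prod.cong refl) (simp add: UNIV_bool mult.commute)
  finally show ?thesis .
qed

definition mm :: "nat \<Rightarrow> (nat \<Rightarrow> nat) \<Rightarrow> (nat \<Rightarrow> nat) \<Rightarrow> ((nat \<times> bool) \<Rightarrow>\<^sub>0 nat)" where
  "mm f A B = (\<Sum>j<f. sg (j, False) (A j) + sg (j, True) (B j))"

lemma lookup_mm: "lk (mm f A B) (i, b) = (if i < f then (if b then B i else A i) else 0)"
proof -
  have "lk (mm f A B) (i, b) = (\<Sum>j<f. (if j = i then (if b then B i else A i) else 0))"
    unfolding mm_def lookup_sum lookup_add
    by (intro sum.cong) (auto simp: lookup_single when_def)
  also have "\<dots> = (if i < f then (if b then B i else A i) else 0)"
    by (simp add: sum.delta')
  finally show ?thesis .
qed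

lemma dg_mm: "(\<And>j. j < f \<Longrightarrow> A j + B j = n j) \<Longrightarrow> dg f n (mm f A B)"
  by (simp add: dg_def lookup_mm)

lemma monoXY: "(\<Prod>j<f. Xv j ^ A j * Yv j ^ B j) = (sg (mm f A B) 1 :: 'k::comm_ring_1 mpoly)"
  by (simp add: Xv_def Yv_def var_power mult_single prod_single1 mm_def)

lemma mm_of: "(\<forall>j b. f \<le> j \<longrightarrow> lk m (j, b) = 0) \<Longrightarrow> m = mm f (\<lambda>j. lk m (j, False)) (\<lambda>j. lk m (j, True))"
  by (rule poly_mapping_eqI) (auto simp: lookup_mm not_less)

lemma tens_monoXY: "(\<And>j. j < f \<Longrightarrow> A j + B j = n j) \<Longrightarrow> (\<Prod>j<f. Xv j ^ A j * Yv j ^ B j) \<in> (tens f n :: 'k::comm_ring_1 mpoly set)"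
  unfolding monoXY by (intro tens_single dg_mm)

definition tp :: "nat \<Rightarrow> nat \<Rightarrow> 'k::comm_ring_1 \<Rightarrow> 'k \<Rightarrow> nat \<times> bool \<Rightarrow> 'k" where
  "tp p f x y = (\<lambda>(j, b). if j < f then (if b then y ^ (p ^ j) else x ^ (p ^ j)) else 0)"

lemma tp_simps [simp]: "j < f \<Longrightarrow> tp p f x y (j, True) = y ^ (p ^ j)"
  "j < f \<Longrightarrow> tp p f x y (j, False) = x ^ (p ^ j)"
  "\<not> j < f \<Longrightarrow> tp p f x y (j, b) = 0"
  by (auto simp: tp_def)

lemma mon_tp:
  assumes "\<forall>j b. f \<le> j \<longrightarrow> lk m (j, b) = 0"
  shows "mon (tp p f x y) m = x ^ (\<Sum>j<f. lk m (j, False) * p ^ j) * y ^ (\<Sum>j<f. lk m (j, True) * p ^ j)"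
proof -
  have "mon (tp p f x y) m = (\<Prod>j<f. (x ^ (p ^ j)) ^ lk m (j, False) * (y ^ (p ^ j)) ^ lk m (j, True))"
    unfolding mon_def prod_keys_split[OF assms] by (intro prod.cong refl) simp
  also have "\<dots> = (\<Prod>j<f. x ^ (lk m (j, False) * p ^ j)) * (\<Prod>j<f. y ^ (lk m (j, True) * p ^ j))"
    by (simp add: prod.distrib power_mult mult.commute)
  also have "\<dots> = x ^ (\<Sum>j<f. lk m (j, False) * p ^ j) * y ^ (\<Sum>j<f. lk m (j, True) * p ^ j)"
    by (simp add: power_sum)
  finally show ?thesis .
qed

lemma ev_monoXY:
  "ev (tp p f x y) (\<Prod>j<f. Xv j ^ A j * Yv j ^ B j) = x ^ (\<Sum>j<f. A j * p ^ j) * y ^ (\<Sum>j<f. B j * p ^ j)"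
proof -
  have "ev (tp p f x y) (\<Prod>j<f. Xv j ^ A j * Yv j ^ B j) = mon (tp p f x y) (mm f A B)"
    by (simp add: monoXY ev_single)
  also have "\<dots> = x ^ (\<Sum>j<f. A j * p ^ j) * y ^ (\<Sum>j<f. B j * p ^ j)"
    by (subst mon_tp) (auto simp: lookup_mm)
  finally show ?thesis .
qed

lemma ev_lin_ext: "ev \<tau> (lin_ext img Q) = (\<Sum>m\<in>ks Q. lk Q m * ev \<tau> (img m))"
  by (simp add: lin_ext_def ev_sum ev_mult)

lemma in_theta_ideal_ev:
  assumes "in_theta_ideal p f P" "\<And>j. j < f \<Longrightarrow> ev \<tau> (theta p f j) = 0"
  shows "ev \<tau> P = 0"
proof -
  obtain c where "P = (\<Sum>j<f. c j * theta p f j)" using assms(1) by (auto simp: in_theta_ideal_def)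
  then show ?thesis using assms(2) by (simp add: ev_sum ev_mult)
qed

lemma evp_act:
  assumes "prime CHAR('k::field)" "p = CHAR('k)"
  shows "ev (tp p f x y) (act p f a b c d P) = ev (tp p f (a * x + c * y) (b * x + d * y)) (P :: 'k mpoly)"
proof -
  have fr: "(u + w) ^ (p ^ j) = u ^ (p ^ j) + w ^ (p ^ j)" for u w :: 'k and j
    using freshmans_dream'[OF assms(1), of "p ^ j" j u w] assms(2) by simp
  have "(\<lambda>v. ev (tp p f x y)
          ((\<lambda>(j, isY). if j < f then
             (if \<not> isY then const (a ^ (p ^ j)) * Xv j + const (c ^ (p ^ j)) * Yv j
              else const (b ^ (p ^ j)) * Xv j + const (d ^ (p ^ j)) * Yv j)
            else var (j, isY)) v)) = tp p f (a * x + c * y) (b * x + d * y)"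
  proof
    fix v :: "nat \<times> bool"
    obtain j isY where v: "v = (j, isY)" by (cases v)
    show "ev (tp p f x y)
          ((\<lambda>(j, isY). if j < f then
             (if \<not> isY then const (a ^ (p ^ j)) * Xv j + const (c ^ (p ^ j)) * Yv j
              else const (b ^ (p ^ j)) * Xv j + const (d ^ (p ^ j)) * Yv j)
            else var (j, isY)) v) = tp p f (a * x + c * y) (b * x + d * y) v"
      using v by (cases "j < f"; cases isY) (simp_all add: ev_add ev_mult Xv_def Yv_def fr power_mult_distrib)
  qed
  then show ?thesis unfolding act_def ev_subst by simp
qed

lemma sum_pm1: "(\<Sum>j<f. (p - 1) * p ^ j) = p ^ f - (1::nat)" if "1 \<le> p"
proof (induction f)
  case 0 then show ?case by simp
next
  case (Suc f)
  have "1 \<le> p ^ f" using that by simp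
  then have "p ^ f - 1 + (p - 1) * p ^ f = p * p ^ f - 1" using that
    by (simp add: algebra_simps diff_mult_distrib)
  then show ?case using Suc by simp
qed

lemma digits_inj:
  fixes d e :: "nat \<Rightarrow> nat"
  assumes "\<forall>j<f. d j < p" "\<forall>j<f. e j < p" "(\<Sum>j<f. d j * p ^ j) = (\<Sum>j<f. e j * p ^ j)"
  shows "\<forall>j<f. d j = e j"
  using assms
proof (induction f arbitrary: d e)
  case 0 then show ?case by simp
next
  case (Suc f)
  have split: "(\<Sum>j<Suc f. g j * p ^ j) = g 0 + p * (\<Sum>j<f. g (Suc j) * p ^ j)" for g :: "nat \<Rightarrow> nat"
    by (subst sum.lessThan_Suc_shift) (simp add: sum_distrib_left mult_ac)
  have d0: "d 0 < p" "e 0 < p" using Suc.prems by auto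
  have eq: "d 0 + p * (\<Sum>j<f. d (Suc j) * p ^ j) = e 0 + p * (\<Sum>j<f. e (Suc j) * p ^ j)"
    using Suc.prems(3) by (simp only: split)
  then have "(d 0 + p * (\<Sum>j<f. d (Suc j) * p ^ j)) mod p = (e 0 + p * (\<Sum>j<f. e (Suc j) * p ^ j)) mod p"
    by simp
  then have e0: "d 0 = e 0" using d0 by simp
  then have "p * (\<Sum>j<f. d (Suc j) * p ^ j) = p * (\<Sum>j<f. e (Suc j) * p ^ j)"
    using eq by (metis add_left_imp_eq)
  then have "(\<Sum>j<f. d (Suc j) * p ^ j) = (\<Sum>j<f. e (Suc j) * p ^ j)"
    using d0(1) by (metis mult_left_cancel not_less0)
  moreover have "\<forall>j<f. d (Suc j) < p" "\<forall>j<f. e (Suc j) < p" using Suc.prems(1,2) by auto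
  ultimately have "\<forall>j<f. d (Suc j) = e (Suc j)"
    using Suc.IH[of "\<lambda>j. d (Suc j)" "\<lambda>j. e (Suc j)"] by blast
  then show ?case using e0 by (auto simp: less_Suc_eq_0_disj)
qed

locale setting =
  fixes p f q :: nat and r :: "nat \<Rightarrow> nat" and kt :: "'k::field itself"
  assumes pr: "prime p" and f2: "2 \<le> f" and qd: "q = p ^ f"
    and rq: "\<forall>j<f. q \<le> r j"
    and dv: "(q - 1) dvd (\<Sum>j<f. r j * p ^ j)"
    and ch: "CHAR('k) = p"
    and ac: "\<forall>P :: 'k poly. 0 < degree P \<longrightarrow> (\<exists>x. poly P x = 0)"
begin

definition Rs where "Rs = (\<Sum>j<f. r j * p ^ j)"
definition Dd where "Dd = (\<Sum>j<f. (r j - (p - 1)) * p ^ j)"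

lemma p2: "2 \<le> p" using pr prime_ge_2_nat by blast
lemma f1: "1 \<le> f" using f2 by simp
lemma pq: "p \<le> q"
proof -
  have "p ^ 1 \<le> p ^ f" using f1 p2 by (intro power_increasing) auto
  then show ?thesis using qd by simp
qed
lemma q2: "2 \<le> q" using p2 pq by linarith
lemma rj: "j < f \<Longrightarrow> p \<le> r j" using rq pq by force

lemma sumq: "(\<Sum>j<f. (p - 1) * p ^ j) = q - 1" using sum_pm1[of p f] p2 qd by simp

lemma Rs_Dd: "Rs = Dd + (q - 1)"
proof -
  have "Rs = (\<Sum>j<f. (r j - (p - 1)) * p ^ j + (p - 1) * p ^ j)"
    unfolding Rs_def
  proof (intro sum.cong refl)
    fix x assume "x \<in> {..<f}"
    then have "p - 1 \<le> r x" using rj by force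
    then show "r x * p ^ x = (r x - (p - 1)) * p ^ x + (p - 1) * p ^ x"
      by (metis add_mult_distrib le_add_diff_inverse2)
  qed
  also have "\<dots> = Dd + (q - 1)" using sumq by (simp add: sum.distrib Dd_def)
  finally show ?thesis .
qed

lemma dv_Rs: "(q - 1) dvd Rs" using dv Rs_def by simp
lemma dv_Dd: "(q - 1) dvd Dd" using dv_Rs Rs_Dd by (simp add: dvd_add_left_iff)

lemma Dd_pos: "1 \<le> Dd"
proof -
  have "(r 0 - (p - 1)) * p ^ 0 \<le> Dd" unfolding Dd_def using f1
    by (intro member_le_sum) auto
  moreover have "1 \<le> r 0 - (p - 1)" using rj[of 0] f1 p2 by simp
  ultimately show ?thesis by simp
qed

lemma Rs_pos: "1 \<le> Rs" using Dd_pos Rs_Dd by simp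

lemma freshq: "(x + y) ^ q = x ^ q + (y :: 'k) ^ q"
  using freshmans_dream'[of q f x y] pr ch qd by simp

lemma Fq_add: "x \<in> Fq q \<Longrightarrow> y \<in> Fq q \<Longrightarrow> x + y \<in> (Fq q :: 'k set)"
  by (simp add: Fq_def freshq)
lemma Fq_mult: "x \<in> Fq q \<Longrightarrow> y \<in> Fq q \<Longrightarrow> x * y \<in> (Fq q :: 'k set)"
  by (simp add: Fq_def power_mult_distrib)
lemma Fq_0: "0 \<in> (Fq q :: 'k set)" using q2 by (simp add: Fq_def)
lemma Fq_1: "1 \<in> (Fq q :: 'k set)" by (simp add: Fq_def)

lemma Fq_unit: "x \<in> Fq q \<Longrightarrow> x \<noteq> 0 \<Longrightarrow> (x::'k) ^ (q - 1) = 1"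
proof -
  assume "x \<in> Fq q" "x \<noteq> 0"
  then have "x * x ^ (q - 1) = x * 1" using q2 by (simp add: Fq_def flip: power_Suc)
  then show ?thesis using \<open>x \<noteq> 0\<close> by simp
qed

lemma Fq_pow_dvd1: "x \<in> Fq q \<Longrightarrow> x \<noteq> 0 \<Longrightarrow> (q - 1) dvd e \<Longrightarrow> (x::'k) ^ e = 1"
proof -
  assume a: "x \<in> Fq q" "x \<noteq> 0" "(q - 1) dvd e"
  then obtain k where "e = (q - 1) * k" by (auto elim: dvdE)
  then have "x ^ e = (x ^ (q - 1)) ^ k" by (simp only: power_mult)
  then show ?thesis using Fq_unit[OF a(1,2)] by simp
qed

lemma Fq_pow_dvd: "x \<in> Fq q \<Longrightarrow> (q - 1) dvd e \<Longrightarrow> 0 < e \<Longrightarrow> (x::'k) ^ e = x ^ (q - 1)"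
proof (cases "x = 0")
  case True
  assume "0 < e"
  moreover have "0 < q - 1" using q2 by simp
  ultimately show ?thesis using True by (simp add: zero_power)
next
  case False
  assume "x \<in> Fq q" "(q - 1) dvd e"
  then show ?thesis using False Fq_pow_dvd1[of x e] Fq_unit[of x] by simp
qed

lemma theta_ev:
  assumes "x \<in> Fq q" "y \<in> Fq q" "j < f"
  shows "ev (tp p f x y) (theta p f j :: 'k mpoly) = 0"
proof (cases j)
  case 0
  have jm: "(j + f - 1) mod f = f - 1" using 0 f1 by simp
  have "(y ^ p ^ (f - 1)) ^ p = y ^ q" "(x ^ p ^ (f - 1)) ^ p = x ^ q" using f1 qd
    by (simp_all flip: power_mult power_Suc2)
  then show ?thesis using assms 0 jm f1
    by (simp add: theta_def ev_diff ev_mult ev_power Xv_def Yv_def Fq_def mult.commute)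
next
  case (Suc i)
  have jm: "(j + f - 1) mod f = i" using Suc assms(3) by simp
  have "(z ^ p ^ i) ^ p = z ^ (p ^ j)" for z :: 'k using Suc by (simp flip: power_mult add: power_Suc2 mult.commute)
  moreover have "i < f" using Suc assms(3) by simp
  ultimately show ?thesis using assms jm
    by (simp add: theta_def ev_diff ev_mult ev_power Xv_def Yv_def mult.commute)
qed

lemma ideal_ev:
  "x \<in> Fq q \<Longrightarrow> y \<in> Fq q \<Longrightarrow> in_theta_ideal p f P \<Longrightarrow> ev (tp p f x y) (P :: 'k mpoly) = 0"
  using in_theta_ideal_ev theta_ev by blast

end

lemma dg_le: "dg f n m \<Longrightarrow> j < f \<Longrightarrow> lk m (j, True) \<le> n j"
  unfolding dg_def by (metis le_add2)

lemma dg_F: "dg f n m \<Longrightarrow> j < f \<Longrightarrow> lk m (j, False) = n j - lk m (j, True)"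
  unfolding dg_def by (metis add_diff_cancel_right')

lemma dg_out: "dg f n m \<Longrightarrow> \<forall>j b. f \<le> j \<longrightarrow> lk m (j, b) = 0"
  unfolding dg_def by blast

lemma dg_eqI:
  assumes "dg f n m" "dg f n m'" "\<forall>j<f. lk m (j, True) = lk m' (j, True)"
  shows "m = m'"
proof (rule poly_mapping_eqI)
  fix v :: "nat \<times> bool"
  obtain j b where v: "v = (j, b)" by (cases v)
  show "lk m v = lk m' v"
  proof (cases "j < f")
    case True
    then show ?thesis using assms v dg_F[OF assms(1) True] dg_F[OF assms(2) True] by (cases b) auto
  next
    case False
    then show ?thesis using assms(1,2) v by (simp add: dg_def)
  qed
qed

context setting
begin

lemma L1:
  assumes Q: "Q \<in> tens f (\<lambda>_. p - 1)" and x: "x \<in> Fq q" and y: "y \<in> Fq q" and nz: "\<not> (x = 0 \<and> y = 0)"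
  shows "ev (tp p f x y) (iota1 p f r Q) = ev (tp p f x y) (Q :: 'k mpoly)"
  unfolding iota1_def ev_lin_ext ev_def[of _ Q]
proof (intro sum.cong refl arg_cong2[where f = "(*)"])
  fix m assume mQ: "m \<in> ks Q"
  then have dgm: "dg f (\<lambda>_. p - 1) m" using Q by (simp add: tens_iff)
  define i where "i j = lk m (j, True)" for j
  have ile: "j < f \<Longrightarrow> i j \<le> p - 1" for j using dg_le[OF dgm] i_def by simp
  have monm: "mon (tp p f x y) m = x ^ (\<Sum>j<f. (p - 1 - i j) * p ^ j) * y ^ (\<Sum>j<f. i j * p ^ j)"
  proof -
    have "mon (tp p f x y) m = x ^ (\<Sum>j<f. lk m (j, False) * p ^ j) * y ^ (\<Sum>j<f. i j * p ^ j)"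
      using mon_tp[OF dg_out[OF dgm]] i_def by simp
    also have "(\<Sum>j<f. lk m (j, False) * p ^ j) = (\<Sum>j<f. (p - 1 - i j) * p ^ j)"
      using dg_F[OF dgm] i_def by (intro sum.cong refl) simp
    finally show ?thesis .
  qed
  show "ev (tp p f x y) (if \<forall>j<f. lk m (j, True) = p - 1 then \<Prod>j<f. Yv j ^ r j
          else \<Prod>j<f. Xv j ^ (r j - lk m (j, True)) * Yv j ^ lk m (j, True)) = mon (tp p f x y) m"
  proof (cases "\<forall>j<f. i j = p - 1")
    case True
    have "(\<Prod>j<f. Yv j ^ r j) = (\<Prod>j<f. Xv j ^ 0 * Yv j ^ r j :: 'k mpoly)" by simp
    then have "ev (tp p f x y) (\<Prod>j<f. Yv j ^ r j :: 'k mpoly) = y ^ Rs"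
      by (simp only: ev_monoXY) (simp add: Rs_def)
    moreover have "mon (tp p f x y) m = y ^ (q - 1)"
    proof -
      have s0: "(\<Sum>j<f. (p - 1 - i j) * p ^ j) = 0"
        by (rule sum.neutral) (use True in simp)
      have "(\<Sum>j<f. i j * p ^ j) = (\<Sum>j<f. (p - 1) * p ^ j)"
        by (rule sum.cong) (use True in simp_all)
      then have s1: "(\<Sum>j<f. i j * p ^ j) = q - 1" using sumq by simp
      show ?thesis unfolding monm s0 s1 by simp
    qed
    moreover have "y ^ Rs = y ^ (q - 1)" using Fq_pow_dvd[OF y dv_Rs] Rs_pos by simp
    ultimately show ?thesis using True i_def by simp
  next
    case False
    then obtain j0 where j0: "j0 < f" "i j0 \<noteq> p - 1" by blast
    define E where "E = (\<Sum>j<f. (p - 1 - i j) * p ^ j)"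
    have Epos: "1 \<le> E"
    proof -
      have "(p - 1 - i j0) * p ^ j0 \<le> E" unfolding E_def using j0 by (intro member_le_sum) auto
      moreover have "1 \<le> (p - 1 - i j0) * p ^ j0" using j0 ile[of j0] p2 by simp
      ultimately show ?thesis by linarith
    qed
    have sumeq: "(\<Sum>j<f. (r j - i j) * p ^ j) = Dd + E"
    proof -
      have "(\<Sum>j<f. (r j - i j) * p ^ j) = (\<Sum>j<f. (r j - (p - 1)) * p ^ j + (p - 1 - i j) * p ^ j)"
      proof (intro sum.cong refl)
        fix j assume "j \<in> {..<f}"
        then have "i j \<le> p - 1" "p - 1 \<le> r j" using ile rj by force+
        then have "r j - i j = (r j - (p - 1)) + (p - 1 - i j)" by simp
        then show "(r j - i j) * p ^ j = (r j - (p - 1)) * p ^ j + (p - 1 - i j) * p ^ j"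
          by (simp add: add_mult_distrib)
      qed
      then show ?thesis by (simp add: sum.distrib Dd_def E_def)
    qed
    have ev_eq: "ev (tp p f x y) (\<Prod>j<f. Xv j ^ (r j - i j) * Yv j ^ i j :: 'k mpoly)
          = x ^ (Dd + E) * y ^ (\<Sum>j<f. i j * p ^ j)"
      by (simp only: ev_monoXY sumeq)
    have xE: "x ^ (Dd + E) = x ^ E"
    proof (cases "x = 0")
      case True then show ?thesis using Epos Dd_pos by (simp add: zero_power)
    next
      case False then show ?thesis using Fq_pow_dvd1[OF x False dv_Dd] by (simp add: power_add)
    qed
    have nt: "\<not> (\<forall>j<f. lk m (j, True) = p - 1)" using False by (simp add: i_def)
    have li: "\<And>j. lk m (j, True) = i j" by (simp add: i_def)
    show ?thesis
      by (subst if_not_P[OF nt]) (simp only: li ev_eq xE monm E_def[symmetric])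
  qed
qed

lemma tens0_keys: "Q \<in> tens f (\<lambda>_. 0) \<Longrightarrow> ks Q \<subseteq> {0}"
proof
  fix m assume "Q \<in> tens f (\<lambda>_. 0)" "m \<in> ks Q"
  then have dgm: "dg f (\<lambda>_. 0) m" by (simp add: tens_iff)
  have "m = 0"
  proof (rule poly_mapping_eqI)
    fix v :: "nat \<times> bool"
    obtain j b where v: "v = (j, b)" by (cases v)
    show "lk m v = lk 0 v" using dgm v unfolding dg_def by (cases "j < f"; cases b) auto
  qed
  then show "m \<in> {0}" by simp
qed

lemma tens0_const: "Q \<in> tens f (\<lambda>_. 0) \<Longrightarrow> Q = const (lk Q 0)"
proof (rule poly_mapping_eqI)
  fix m assume "Q \<in> tens f (\<lambda>_. 0)"
  then have "ks Q \<subseteq> {0}" by (rule tens0_keys)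
  then show "lk Q m = lk (const (lk Q 0)) m"
    by (cases "m = 0") (auto simp: const_def lookup_single in_keys_iff)
qed

lemma L0:
  assumes Q: "Q \<in> tens f (\<lambda>_. 0)" and x: "x \<in> Fq q" and y: "y \<in> Fq q" and nz: "\<not> (x = 0 \<and> y = 0)"
  shows "ev (tp p f x y) (iota0 p f r Q) = ev (tp p f x y) (Q :: 'k mpoly)"
  unfolding iota0_def ev_lin_ext ev_def[of _ Q]
proof (intro sum.cong refl arg_cong2[where f = "(*)"])
  fix m assume mQ: "m \<in> ks Q"
  then have m0: "m = 0" using tens0_keys[OF Q] by blast
  have e1: "ev (tp p f x y) (\<Prod>j<f. Xv j ^ r j :: 'k mpoly) = x ^ Rs"
  proof -
    have "(\<Prod>j<f. Xv j ^ r j) = (\<Prod>j<f. Xv j ^ r j * Yv j ^ 0 :: 'k mpoly)" by simp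
    then show ?thesis by (simp only: ev_monoXY) (simp add: Rs_def)
  qed
  have e3: "ev (tp p f x y) (\<Prod>j<f. Yv j ^ r j :: 'k mpoly) = y ^ Rs"
  proof -
    have "(\<Prod>j<f. Yv j ^ r j) = (\<Prod>j<f. Xv j ^ 0 * Yv j ^ r j :: 'k mpoly)" by simp
    then show ?thesis by (simp only: ev_monoXY) (simp add: Rs_def)
  qed
  have e2: "ev (tp p f x y) (\<Prod>j<f. Xv j ^ (r j - (p - 1)) * Yv j ^ (p - 1) :: 'k mpoly) = x ^ Dd * y ^ (q - 1)"
    by (simp only: ev_monoXY sumq) (simp add: Dd_def)
  have yR: "y ^ Rs = y ^ (q - 1)" using Fq_pow_dvd[OF y dv_Rs] Rs_pos by simp
  have "x ^ Rs - x ^ Dd * y ^ (q - 1) + y ^ Rs = 1"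
  proof (cases "x = 0")
    case True
    then have "y \<noteq> 0" using nz by simp
    then show ?thesis using True yR Rs_pos Dd_pos Fq_unit[OF y] by (simp add: zero_power)
  next
    case False
    then show ?thesis using yR Fq_pow_dvd1[OF x False dv_Rs] Fq_pow_dvd1[OF x False dv_Dd] by simp
  qed
  then show "ev (tp p f x y) ((\<Prod>j<f. Xv j ^ r j) - (\<Prod>j<f. Xv j ^ (r j - (p - 1)) * Yv j ^ (p - 1))
      + (\<Prod>j<f. Yv j ^ r j)) = mon (tp p f x y) m"
    using e1 e2 e3 m0 by (simp add: ev_add ev_diff)
qed

end

context setting
begin

lemma core:
  assumes Q1: "Q1 \<in> tens f (\<lambda>_. p - 1)"
    and H: "\<forall>t\<in>Fq q. \<alpha> + ev (tp p f 1 t) Q1 = (0::'k)"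
    and H2: "\<alpha> + ev (tp p f 0 1) Q1 = 0"
  shows "\<alpha> = 0 \<and> Q1 = 0"
proof -
  define nn where "nn m = (\<Sum>j<f. lk m (j, True) * p ^ j)" for m
  define top where "top = mm f (\<lambda>_. 0) (\<lambda>_. p - 1)"
  have dgQ: "\<And>m. m \<in> ks Q1 \<Longrightarrow> dg f (\<lambda>_. p - 1) m" using Q1 by (simp add: tens_iff)
  have dgtop: "dg f (\<lambda>_. p - 1) top" by (simp add: top_def dg_mm)
  have nn_le: "nn m \<le> q - 1" if "dg f (\<lambda>_. p - 1) m" for m
  proof -
    have "nn m \<le> (\<Sum>j<f. (p - 1) * p ^ j)" unfolding nn_def
      using dg_le[OF that] by (intro sum_mono) simp
    then show ?thesis using sumq by simp
  qed
  have nn_inj: "m = m'" if "dg f (\<lambda>_. p - 1) m" "dg f (\<lambda>_. p - 1) m'" "nn m = nn m'" for m m'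
  proof (rule dg_eqI[OF that(1,2)])
    have "\<forall>j<f. lk m (j, True) < p"
    proof (intro allI impI)
      fix j assume j: "j < f"
      show "lk m (j, True) < p" using dg_le[OF that(1) j] p2 by simp
    qed
    moreover have "\<forall>j<f. lk m' (j, True) < p"
    proof (intro allI impI)
      fix j assume j: "j < f"
      show "lk m' (j, True) < p" using dg_le[OF that(2) j] p2 by simp
    qed
    ultimately show "\<forall>j<f. lk m (j, True) = lk m' (j, True)"
      using that(3) unfolding nn_def by (rule digits_inj)
  qed
  have nn_top: "nn top = q - 1"
    unfolding nn_def top_def using sumq by (simp add: lookup_mm)
  have mon1: "mon (tp p f 1 t) m = t ^ nn m" if "dg f (\<lambda>_. p - 1) m" for m t
    by (simp add: mon_tp[OF dg_out[OF that]] nn_def)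
  have mon0: "mon (tp p f 0 1) m = (if m = top then 1 else (0::'k))" if dm: "dg f (\<lambda>_. p - 1) m" for m
  proof -
    have e: "mon (tp p f 0 1) m = (0::'k) ^ (\<Sum>j<f. lk m (j, False) * p ^ j)"
      by (simp add: mon_tp[OF dg_out[OF dm]])
    show ?thesis
    proof (cases "m = top")
      case True
      then show ?thesis using e by (simp add: top_def lookup_mm)
    next
      case False
      have "\<exists>j<f. lk m (j, False) \<noteq> 0"
      proof (rule ccontr)
        assume "\<not> (\<exists>j<f. lk m (j, False) \<noteq> 0)"
        then have "\<forall>j<f. lk m (j, True) = lk top (j, True)"
          using dm by (simp add: dg_def top_def lookup_mm)
        then have "m = top" by (rule dg_eqI[OF dm dgtop])
        then show False using False by simp
      qed
      then obtain j where j: "j < f" "lk m (j, False) \<noteq> 0" by blast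
      have "lk m (j, False) * p ^ j \<le> (\<Sum>j<f. lk m (j, False) * p ^ j)"
        using j by (intro member_le_sum) auto
      moreover have "0 < lk m (j, False) * p ^ j" using j p2 by simp
      ultimately have "0 < (\<Sum>j<f. lk m (j, False) * p ^ j)" by linarith
      then show ?thesis using e False by (simp add: zero_power)
    qed
  qed
  have ev0: "ev (tp p f 0 1) Q1 = lk Q1 top"
  proof -
    have "ev (tp p f 0 1) Q1 = (\<Sum>m\<in>ks Q1. if m = top then lk Q1 m else 0)"
      unfolding ev_def
    proof (intro sum.cong refl)
      fix m assume mk: "m \<in> ks Q1"
      show "lk Q1 m * mon (tp p f 0 1) m = (if m = top then lk Q1 m else 0)"
        by (simp add: mon0[OF dgQ[OF mk]])
    qed
    also have "\<dots> = lk Q1 top" by (simp add: in_keys_iff)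
    finally show ?thesis .
  qed
  define Rp where "Rp = [:\<alpha>:] + (\<Sum>m\<in>ks Q1. monom (lk Q1 m) (nn m))"
  have "Rp = 0"
  proof (rule Fq_poly_zero[OF pr ch qd f1 ac])
    have "degree Rp \<le> q - 1" unfolding Rp_def
    proof (intro degree_add_le degree_sum_le)
      fix m assume "m \<in> ks Q1"
      then show "degree (monom (lk Q1 m) (nn m)) \<le> q - 1"
        using nn_le dgQ degree_monom_le le_trans by blast
    qed auto
    then show "degree Rp < q" using q2 by linarith
    show "\<forall>t\<in>Fq q. poly Rp t = 0"
    proof
      fix t :: 'k assume t: "t \<in> Fq q"
      have "poly Rp t = \<alpha> + (\<Sum>m\<in>ks Q1. lk Q1 m * t ^ nn m)"
        by (simp add: Rp_def poly_sum poly_monom)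
      also have "(\<Sum>m\<in>ks Q1. lk Q1 m * t ^ nn m) = ev (tp p f 1 t) Q1"
        unfolding ev_def
      proof (intro sum.cong refl)
        fix m assume mk: "m \<in> ks Q1"
        show "lk Q1 m * t ^ nn m = lk Q1 m * mon (tp p f 1 t) m"
          by (simp add: mon1[OF dgQ[OF mk]])
      qed
      finally show "poly Rp t = 0" using H t by simp
    qed
  qed
  have coef: "lk Q1 m0 + (if nn m0 = 0 then \<alpha> else 0) = 0" if m0: "m0 \<in> ks Q1" for m0
  proof -
    have c1: "coeff [:\<alpha>:] (nn m0) = (if nn m0 = 0 then \<alpha> else 0)" by (cases "nn m0") simp_all
    have "coeff (\<Sum>m\<in>ks Q1. monom (lk Q1 m) (nn m)) (nn m0) = (\<Sum>m\<in>ks Q1. if m = m0 then lk Q1 m else 0)"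
      unfolding coeff_sum
    proof (intro sum.cong refl)
      fix m assume "m \<in> ks Q1"
      then have "nn m = nn m0 \<longleftrightarrow> m = m0" using nn_inj dgQ m0 by blast
      then show "coeff (monom (lk Q1 m) (nn m)) (nn m0) = (if m = m0 then lk Q1 m else 0)" by simp
    qed
    also have "\<dots> = lk Q1 m0" using m0 by simp
    finally have "coeff Rp (nn m0) = (if nn m0 = 0 then \<alpha> else 0) + lk Q1 m0"
      unfolding Rp_def coeff_add c1 by simp
    then show ?thesis using \<open>Rp = 0\<close> by (simp add: add.commute)
  qed
  have "lk Q1 top = 0"
  proof (rule ccontr)
    assume "lk Q1 top \<noteq> 0"
    then have "top \<in> ks Q1" by (simp add: in_keys_iff)
    moreover have "nn top \<noteq> 0" using nn_top q2 by simp
    ultimately have "lk Q1 top = 0" using coef by fastforce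
    then show False using \<open>lk Q1 top \<noteq> 0\<close> by simp
  qed
  then have a0: "\<alpha> = 0" using H2 ev0 by simp
  have "ks Q1 = {}"
  proof (rule ccontr)
    assume "ks Q1 \<noteq> {}"
    then obtain m0 where "m0 \<in> ks Q1" by blast
    then have "lk Q1 m0 = 0" using coef a0 by fastforce
    then show False using \<open>m0 \<in> ks Q1\<close> by (simp add: in_keys_iff)
  qed
  then show ?thesis using a0 by simp
qed

end

lemma ideal_0: "in_theta_ideal p f 0"
  unfolding in_theta_ideal_def by (rule exI[of _ "\<lambda>_. 0"]) simp

lemma ideal_add: "in_theta_ideal p f P \<Longrightarrow> in_theta_ideal p f Q \<Longrightarrow> in_theta_ideal p f (P + Q)"
  unfolding in_theta_ideal_def
proof (elim exE)
  fix c c' assume "P = (\<Sum>j<f. c j * theta p f j)" "Q = (\<Sum>j<f. c' j * theta p f j)"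
  then have "P + Q = (\<Sum>j<f. (c j + c' j) * theta p f j)" by (simp add: sum.distrib distrib_right)
  then show "\<exists>c. P + Q = (\<Sum>j<f. c j * theta p f j)" by (rule exI[of _ "\<lambda>j. c j + c' j"])
qed

lemma ideal_mult: "in_theta_ideal p f P \<Longrightarrow> in_theta_ideal p f (R * P)"
  unfolding in_theta_ideal_def
proof (elim exE)
  fix c assume "P = (\<Sum>j<f. c j * theta p f j)"
  then have "R * P = (\<Sum>j<f. (R * c j) * theta p f j)" by (simp add: sum_distrib_left mult.assoc)
  then show "\<exists>c. R * P = (\<Sum>j<f. c j * theta p f j)" by (rule exI[of _ "\<lambda>j. R * c j"])
qed

lemma ideal_uminus: "in_theta_ideal p f P \<Longrightarrow> in_theta_ideal p f (- P)"
  using ideal_mult[of p f P "- 1"] by simp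

lemma ideal_diff: "in_theta_ideal p f P \<Longrightarrow> in_theta_ideal p f Q \<Longrightarrow> in_theta_ideal p f (P - Q)"
  using ideal_add[of p f P "- Q"] ideal_uminus[of p f Q] by simp

lemma ideal_theta: "j < f \<Longrightarrow> in_theta_ideal p f (theta p f j)"
  unfolding in_theta_ideal_def
proof (rule exI[of _ "\<lambda>i. if i = j then 1 else 0"])
  assume j: "j < f"
  have "(\<Sum>i<f. (if i = j then 1 else 0) * theta p f i) = (\<Sum>i<f. if i = j then theta p f i else 0)"
    by (intro sum.cong) auto
  also have "\<dots> = theta p f j" using j by (simp add: sum.delta')
  finally show "theta p f j = (\<Sum>i<f. (if i = j then 1 else 0) * theta p f i)" by (rule sym)
qed

lemma lin_ext_superset: "finite S \<Longrightarrow> ks Q \<subseteq> S \<Longrightarrow> lin_ext img Q = (\<Sum>m\<in>S. const (lk Q m) * img m)"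
  unfolding lin_ext_def by (rule sum.mono_neutral_left) (auto simp: in_keys_iff)

lemma lin_ext_add: "lin_ext img (P + Q) = lin_ext img P + lin_ext img Q"
proof -
  let ?S = "ks P \<union> ks Q"
  have "lin_ext img (P + Q) = (\<Sum>m\<in>?S. const (lk (P + Q) m) * img m)"
    by (rule lin_ext_superset) (auto dest: subsetD[OF keys_add])
  also have "\<dots> = (\<Sum>m\<in>?S. const (lk P m) * img m) + (\<Sum>m\<in>?S. const (lk Q m) * img m)"
    by (simp add: lookup_add const_add distrib_right sum.distrib)
  also have "\<dots> = lin_ext img P + lin_ext img Q"
    by (simp add: lin_ext_superset[of "ks P \<union> ks Q" P] lin_ext_superset[of "ks P \<union> ks Q" Q])
  finally show ?thesis .
qed

lemma lin_ext_cmul: "lin_ext img (const c * Q) = const c * lin_ext img Q"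
proof -
  have "lin_ext img (const c * Q) = (\<Sum>m\<in>ks Q. const (lk (const c * Q) m) * img m)"
    by (rule lin_ext_superset) (auto dest: subsetD[OF keys_const_mult])
  also have "\<dots> = const c * lin_ext img Q"
    by (simp add: lookup_const_mult const_mult lin_ext_def sum_distrib_left mult.assoc)
  finally show ?thesis .
qed

lemma lin_ext_zero [simp]: "lin_ext img 0 = 0" by (simp add: lin_ext_def)

lemma lin_ext_single: "lin_ext img (sg m c) = const c * img m"
  by (cases "c = 0") (simp_all add: lin_ext_def)

lemma single_const: "sg m c = const c * sg m (1::'k::comm_ring_1)"
  by (simp add: const_def mult_single)

lemma act_tens:
  assumes P: "P \<in> tens f n"
  shows "act p f a b c d P \<in> tens f n"
  unfolding act_def subst_def
proof (intro tens_sum tens_const_mult)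
  fix m assume "m \<in> ks P"
  then have dm: "dg f n m" using P by (simp add: tens_iff)
  let ?\<sigma> = "\<lambda>(j, isY). if j < f then
       (if \<not> isY then const (a ^ (p ^ j)) * Xv j + const (c ^ (p ^ j)) * Yv j
        else const (b ^ (p ^ j)) * Xv j + const (d ^ (p ^ j)) * Yv j)
     else var (j, isY)"
  have "(\<Prod>v\<in>ks m. ?\<sigma> v ^ lk m v) = (\<Prod>j<f. ?\<sigma> (j, False) ^ lk m (j, False) * ?\<sigma> (j, True) ^ lk m (j, True))"
    by (rule prod_keys_split[OF dg_out[OF dm]])
  also have "\<dots> \<in> tens f (\<lambda>i. \<Sum>j<f. lk m (j, False) * (if i = j then 1 else 0) + lk m (j, True) * (if i = j then 1 else 0))"
  proof (rule tens_prod)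
    fix j assume "j \<in> {..<f}"
    then have j: "j < f" by simp
    show "?\<sigma> (j, False) ^ lk m (j, False) * ?\<sigma> (j, True) ^ lk m (j, True)
       \<in> tens f (\<lambda>i. lk m (j, False) * (if i = j then 1 else 0) + lk m (j, True) * (if i = j then 1 else 0))"
      using j by (auto intro!: tens_mult tens_power tens_lin)
  qed simp
  also have "\<dots> = tens f n"
  proof (rule tens_cong)
    fix i assume i: "i < f"
    have "(\<Sum>j<f. lk m (j, False) * (if i = j then 1 else 0) + lk m (j, True) * (if i = j then 1 else 0))
        = (\<Sum>j<f. if i = j then lk m (j, False) + lk m (j, True) else 0)"
      by (intro sum.cong refl) simp
    also have "\<dots> = n i" using i dm by (simp add: dg_def)
    finally show "(\<Sum>j<f. lk m (j, False) * (if i = j then 1 else 0) + lk m (j, True) * (if i = j then 1 else 0)) = n i" .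
  qed
  finally show "(\<Prod>v\<in>ks m. ?\<sigma> v ^ lk m v) \<in> tens f n" .
qed

lemma move:
  "sg (B + sg (j, False) 1 + sg (jm, True) p) 1 - sg (B + sg (j, True) 1 + sg (jm, False) p) 1
     = sg B 1 * (Xv j * Yv jm ^ p - Yv j * Xv jm ^ p :: 'k::comm_ring_1 mpoly)"
  by (simp add: Xv_def Yv_def var_power) (simp add: var_def mult_single right_diff_distrib add.assoc)

lemma mm_cong: "(\<And>j. j < f \<Longrightarrow> A j = A' j) \<Longrightarrow> (\<And>j. j < f \<Longrightarrow> B j = B' j) \<Longrightarrow> mm f A B = mm f A' B'"
  unfolding mm_def by (intro sum.cong refl) auto

context setting
begin

definition good :: "'k mpoly \<Rightarrow> bool" where
  "good P \<longleftrightarrow> (\<exists>Q0\<in>tens f (\<lambda>_. 0). \<exists>Q1\<in>tens f (\<lambda>_. p - 1).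
      in_theta_ideal p f (P - (iota0 p f r Q0 + iota1 p f r Q1)))"

lemma good_0: "good 0"
  unfolding good_def by (intro bexI[of _ 0]) (auto simp: iota0_def iota1_def ideal_0)

lemma good_add: "good P \<Longrightarrow> good P' \<Longrightarrow> good (P + P')"
  unfolding good_def
proof (elim bexE)
  fix Q0 Q1 Q0' Q1'
  assume a: "Q0 \<in> tens f (\<lambda>_. 0)" "Q1 \<in> tens f (\<lambda>_. p - 1)" "Q0' \<in> tens f (\<lambda>_. 0)" "Q1' \<in> tens f (\<lambda>_. p - 1)"
    and i: "in_theta_ideal p f (P - (iota0 p f r Q0 + iota1 p f r Q1))"
      "in_theta_ideal p f (P' - (iota0 p f r Q0' + iota1 p f r Q1'))"
  have eq: "P + P' - (iota0 p f r (Q0 + Q0') + iota1 p f r (Q1 + Q1'))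
     = (P - (iota0 p f r Q0 + iota1 p f r Q1)) + (P' - (iota0 p f r Q0' + iota1 p f r Q1'))"
    by (simp add: iota0_def iota1_def lin_ext_add algebra_simps)
  have "in_theta_ideal p f (P + P' - (iota0 p f r (Q0 + Q0') + iota1 p f r (Q1 + Q1')))"
    unfolding eq by (rule ideal_add[OF i])
  then show "\<exists>Q0\<in>tens f (\<lambda>_. 0). \<exists>Q1\<in>tens f (\<lambda>_. p - 1).
      in_theta_ideal p f (P + P' - (iota0 p f r Q0 + iota1 p f r Q1))"
    using a by (blast intro: tens_add)
qed

lemma good_cmul: "good P \<Longrightarrow> good (const c * P)"
  unfolding good_def
proof (elim bexE)
  fix Q0 Q1
  assume a: "Q0 \<in> tens f (\<lambda>_. 0)" "Q1 \<in> tens f (\<lambda>_. p - 1)"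
    and i: "in_theta_ideal p f (P - (iota0 p f r Q0 + iota1 p f r Q1))"
  have eq: "const c * P - (iota0 p f r (const c * Q0) + iota1 p f r (const c * Q1))
     = const c * (P - (iota0 p f r Q0 + iota1 p f r Q1))"
    unfolding iota0_def iota1_def lin_ext_cmul by (simp add: algebra_simps)
  have "in_theta_ideal p f (const c * P - (iota0 p f r (const c * Q0) + iota1 p f r (const c * Q1)))"
    unfolding eq by (rule ideal_mult[OF i])
  then show "\<exists>Q0\<in>tens f (\<lambda>_. 0). \<exists>Q1\<in>tens f (\<lambda>_. p - 1).
      in_theta_ideal p f (const c * P - (iota0 p f r Q0 + iota1 p f r Q1))"
    using a by (blast intro: tens_const_mult)
qed

definition jm :: "nat \<Rightarrow> nat" where "jm j = (j + f - 1) mod f"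

lemma jm_lt: "jm j < f" using f1 by (simp add: jm_def)

lemma jm_ne: "j < f \<Longrightarrow> jm j \<noteq> j"
proof -
  assume j: "j < f"
  show ?thesis
  proof (cases j)
    case 0 then show ?thesis using f2 by (simp add: jm_def)
  next
    case (Suc i)
    then have "jm j = i" using j by (simp add: jm_def)
    then show ?thesis using Suc by simp
  qed
qed

lemma jm_succ: "jm (Suc a mod f) = a mod f"
proof -
  have "jm (Suc a mod f) = (Suc a mod f + (f - 1)) mod f" using f1 by (simp add: jm_def)
  also have "\<dots> = (Suc a + (f - 1)) mod f" by (simp add: mod_add_left_eq)
  also have "Suc a + (f - 1) = a + f" using f1 by simp
  finally show ?thesis by simp
qed

end

context setting
begin

lemma good_of_ideal: "in_theta_ideal p f (P - P') \<Longrightarrow> good P' \<Longrightarrow> good P"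
  unfolding good_def
proof (elim bexE)
  fix Q0 Q1
  assume a: "Q0 \<in> tens f (\<lambda>_. 0)" "Q1 \<in> tens f (\<lambda>_. p - 1)" and i1: "in_theta_ideal p f (P - P')"
    and i2: "in_theta_ideal p f (P' - (iota0 p f r Q0 + iota1 p f r Q1))"
  have eq: "P - (iota0 p f r Q0 + iota1 p f r Q1) = (P - P') + (P' - (iota0 p f r Q0 + iota1 p f r Q1))" by simp
  have "in_theta_ideal p f (P - (iota0 p f r Q0 + iota1 p f r Q1))" unfolding eq by (rule ideal_add[OF i1 i2])
  then show "\<exists>Q0\<in>tens f (\<lambda>_. 0). \<exists>Q1\<in>tens f (\<lambda>_. p - 1). in_theta_ideal p f (P - (iota0 p f r Q0 + iota1 p f r Q1))"
    using a by blast
qed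

lemma good_exact:
  assumes "Q0 \<in> tens f (\<lambda>_. 0)" "Q1 \<in> tens f (\<lambda>_. p - 1)" "P = iota0 p f r Q0 + iota1 p f r Q1"
  shows "good P"
  unfolding good_def using assms(1,2) by (intro bexI[of _ Q0] bexI[of _ Q1]) (simp_all add: assms(3) ideal_0)

lemma sg_m: "dg f n m \<Longrightarrow> (sg m 1 :: 'k mpoly) = (\<Prod>j<f. Xv j ^ lk m (j, False) * Yv j ^ lk m (j, True))"
proof -
  assume d: "dg f n m"
  have eq: "m = mm f (\<lambda>j. lk m (j, False)) (\<lambda>j. lk m (j, True))" by (rule mm_of[OF dg_out[OF d]])
  have "(sg m 1 :: 'k mpoly) = sg (mm f (\<lambda>j. lk m (j, False)) (\<lambda>j. lk m (j, True))) 1"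
    using eq by (rule arg_cong)
  also have "\<dots> = (\<Prod>j<f. Xv j ^ lk m (j, False) * Yv j ^ lk m (j, True))" by (rule monoXY[symmetric])
  finally show ?thesis .
qed

lemma iota1_single: "iota1 p f r (sg \<mu> 1 :: 'k mpoly) = (if \<forall>j<f. lk \<mu> (j, True) = p - 1 then \<Prod>j<f. Yv j ^ r j
      else \<Prod>j<f. Xv j ^ (r j - lk \<mu> (j, True)) * Yv j ^ lk \<mu> (j, True))"
  by (simp add: iota1_def lin_ext_single)

lemma canon_good:
  assumes dm: "dg f r m" and le: "\<forall>j<f. lk m (j, True) \<le> p - 1"
  shows "good (sg m 1 :: 'k mpoly)"
proof (cases "\<forall>j<f. lk m (j, True) = p - 1")
  case True
  define \<mu>0 where "\<mu>0 = mm f (\<lambda>_. p - 1) (\<lambda>_. 0)"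
  define \<mu>t where "\<mu>t = mm f (\<lambda>_. 0) (\<lambda>_. p - 1)"
  have d0: "dg f (\<lambda>_. p - 1) \<mu>0" unfolding \<mu>0_def by (rule dg_mm) simp
  have dt: "dg f (\<lambda>_. p - 1) \<mu>t" unfolding \<mu>t_def by (rule dg_mm) simp
  have l0: "\<And>j. lk \<mu>0 (j, True) = 0" by (simp add: \<mu>0_def lookup_mm)
  have lt: "\<And>j. j < f \<Longrightarrow> lk \<mu>t (j, True) = p - 1" by (simp add: \<mu>t_def lookup_mm)
  have nc: "\<not> (\<forall>j<f. lk \<mu>0 (j, True) = p - 1)" using l0 f1 p2 by force
  have i0: "iota1 p f r (sg \<mu>0 1 :: 'k mpoly) = (\<Prod>j<f. Xv j ^ r j)"
    unfolding iota1_single if_not_P[OF nc] by (simp add: l0)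
  have it: "iota1 p f r (sg \<mu>t 1 :: 'k mpoly) = (\<Prod>j<f. Yv j ^ r j)"
    using lt by (simp add: iota1_single)
  have iz: "iota0 p f r (const (- 1) :: 'k mpoly) = - ((\<Prod>j<f. Xv j ^ r j) - (\<Prod>j<f. Xv j ^ (r j - (p - 1)) * Yv j ^ (p - 1))
      + (\<Prod>j<f. Yv j ^ r j))"
    by (simp add: iota0_def const_def lin_ext_single) (simp add: const_uminus[unfolded const_def])
  have sm: "(sg m 1 :: 'k mpoly) = (\<Prod>j<f. Xv j ^ (r j - (p - 1)) * Yv j ^ (p - 1))"
    unfolding sg_m[OF dm] using True dg_F[OF dm] by (intro prod.cong refl) simp
  show ?thesis
  proof (rule good_exact)
    show "(const (- 1) :: 'k mpoly) \<in> tens f (\<lambda>_. 0)" by (rule tens_const)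
    show "(sg \<mu>0 1 + sg \<mu>t 1 :: 'k mpoly) \<in> tens f (\<lambda>_. p - 1)" using d0 dt by (intro tens_add tens_single)
    show "(sg m 1 :: 'k mpoly) = iota0 p f r (const (- 1)) + iota1 p f r (sg \<mu>0 1 + sg \<mu>t 1)"
    proof -
      have ad: "iota1 p f r (sg \<mu>0 1 + sg \<mu>t 1 :: 'k mpoly) = iota1 p f r (sg \<mu>0 1) + iota1 p f r (sg \<mu>t 1)"
        by (simp add: iota1_def lin_ext_add)
      let ?A = "\<Prod>j<f. Xv j ^ r j :: 'k mpoly"
      let ?B = "\<Prod>j<f. Xv j ^ (r j - (p - 1)) * Yv j ^ (p - 1) :: 'k mpoly"
      let ?C = "\<Prod>j<f. Yv j ^ r j :: 'k mpoly"
      have "iota0 p f r (const (- 1)) + iota1 p f r (sg \<mu>0 1 + sg \<mu>t 1) = - (?A - ?B + ?C) + (?A + ?C)"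
        by (simp only: ad iz i0 it)
      also have "\<dots> = ?B" by (simp add: algebra_simps)
      finally show ?thesis using sm by simp

    qed
  qed
next
  case False
  define \<mu> where "\<mu> = mm f (\<lambda>j. p - 1 - lk m (j, True)) (\<lambda>j. lk m (j, True))"
  have d: "dg f (\<lambda>_. p - 1) \<mu>" unfolding \<mu>_def
  proof (rule dg_mm)
    fix j assume "j < f"
    then have "lk m (j, True) \<le> p - 1" using le by blast
    then show "p - 1 - lk m (j, True) + lk m (j, True) = p - 1" by simp
  qed
  have l: "\<And>j. j < f \<Longrightarrow> lk \<mu> (j, True) = lk m (j, True)" by (simp add: \<mu>_def lookup_mm)
  have nc: "\<not> (\<forall>j<f. lk \<mu> (j, True) = p - 1)" using False l by simp
  have "iota1 p f r (sg \<mu> 1 :: 'k mpoly) = (\<Prod>j<f. Xv j ^ (r j - lk \<mu> (j, True)) * Yv j ^ lk \<mu> (j, True))"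
    unfolding iota1_single if_not_P[OF nc] by simp
  also have "\<dots> = sg m 1"
    unfolding sg_m[OF dm] using l dg_F[OF dm] by (intro prod.cong refl) simp
  finally show ?thesis
    by (intro good_exact[of 0 "sg \<mu> 1", OF _ tens_single[OF d]]) (simp_all add: iota0_def)
qed

lemma allY_good:
  assumes dm: "dg f r m" and eq: "\<forall>j<f. lk m (j, True) = r j"
  shows "good (sg m 1 :: 'k mpoly)"
proof -
  define \<mu>t where "\<mu>t = mm f (\<lambda>_. 0) (\<lambda>_. p - 1)"
  have dt: "dg f (\<lambda>_. p - 1) \<mu>t" unfolding \<mu>t_def by (rule dg_mm) simp
  have lt: "\<And>j. j < f \<Longrightarrow> lk \<mu>t (j, True) = p - 1" by (simp add: \<mu>t_def lookup_mm)
  have "iota1 p f r (sg \<mu>t 1 :: 'k mpoly) = (\<Prod>j<f. Yv j ^ r j)"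
    using lt by (simp add: iota1_single)
  also have "\<dots> = sg m 1"
    unfolding sg_m[OF dm] using eq dg_F[OF dm] by (intro prod.cong refl) simp
  finally show ?thesis
    by (intro good_exact[of 0 "sg \<mu>t 1", OF _ tens_single[OF dt]]) (simp_all add: iota0_def)
qed

end

context setting
begin

lemma move_step:
  assumes dm: "dg f r m" and j: "j < f" and hp: "p \<le> lk m (jm j, True)" and hr: "lk m (j, True) < r j"
  shows "\<exists>m'. dg f r m' \<and> (\<Sum>i<f. lk m' (i, True)) < (\<Sum>i<f. lk m (i, True))
           \<and> in_theta_ideal p f (sg m 1 - sg m' 1 :: 'k mpoly)"
proof -
  define k where "k = jm j"
  have k: "k < f" "k \<noteq> j" using jm_lt jm_ne[OF j] k_def by auto
  have hpk: "p \<le> lk m (k, True)" using hp k_def by simp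
  have sF: "lk m (j, False) + lk m (j, True) = r j" using dm j by (simp add: dg_def)
  have F1: "1 \<le> lk m (j, False)" using sF hr by linarith
  define B where "B = m - sg (j, False) 1 - sg (k, True) p"
  have lB: "lk B v = lk m v - (if v = (j, False) then 1 else 0) - (if v = (k, True) then p else 0)" for v
    by (simp add: B_def lookup_minus lookup_single when_def)
  have meq: "m = B + sg (j, False) 1 + sg (k, True) p"
  proof (rule poly_mapping_eqI)
    fix v
    show "lk m v = lk (B + sg (j, False) 1 + sg (k, True) p) v"
    proof (cases "v = (j, False)")
      case True then show ?thesis using F1 by (simp add: lookup_add lB lookup_single when_def)
    next
      case False
      then show ?thesis using hpk by (cases "v = (k, True)") (auto simp: lookup_add lB lookup_single when_def)
    qed
  qed
  define m' where "m' = B + sg (j, True) 1 + sg (k, False) p"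
  have lm': "lk m' v = lk B v + (if v = (j, True) then 1 else 0) + (if v = (k, False) then p else 0)" for v
    by (simp add: m'_def lookup_add lookup_single when_def)
  have lmF: "lk m' (i, False) = lk m (i, False) - (if i = j then 1 else 0) + (if i = k then p else 0)" for i
    by (simp add: lm' lB)
  have lmT: "lk m' (i, True) = lk m (i, True) - (if i = k then p else 0) + (if i = j then 1 else 0)" for i
    by (simp add: lm' lB)
  have dm': "dg f r m'"
    unfolding dg_def
  proof (intro conjI allI impI)
    fix i assume i: "i < f"
    have s: "lk m (i, False) + lk m (i, True) = r i" using dm i by (simp add: dg_def)
    show "lk m' (i, False) + lk m' (i, True) = r i"
      using s F1 hpk k(2) unfolding lmF lmT by (cases "i = j"; cases "i = k") auto
  next
    fix i b assume i: "f \<le> i"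
    then have "i \<noteq> j" "i \<noteq> k" using j k by auto
    moreover have "lk m (i, b) = 0" using dm i by (simp add: dg_def)
    ultimately show "lk m' (i, b) = 0" by (simp add: lm' lB)
  qed
  have pw: "lk m' (i, True) + (if i = k then p else 0) = lk m (i, True) + (if i = j then 1 else 0)" for i
    unfolding lmT using hpk k(2) by (cases "i = j"; cases "i = k") auto
  have "(\<Sum>i<f. lk m' (i, True)) + p = (\<Sum>i<f. lk m (i, True)) + 1"
  proof -
    have "(\<Sum>i<f. lk m' (i, True) + (if i = k then p else 0)) = (\<Sum>i<f. lk m (i, True) + (if i = j then 1 else 0))"
      using pw by simp
    then show ?thesis using j k by (simp add: sum.distrib sum.delta')
  qed
  then have dec: "(\<Sum>i<f. lk m' (i, True)) < (\<Sum>i<f. lk m (i, True))" using p2 by linarith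
  have "(sg m 1 :: 'k mpoly) - sg m' 1 = sg (B + sg (j, False) 1 + sg (k, True) p) 1 - sg (B + sg (j, True) 1 + sg (k, False) p) 1"
    using meq m'_def by simp
  also have "\<dots> = sg B 1 * theta p f j"
    unfolding move theta_def k_def jm_def by simp
  finally have "in_theta_ideal p f (sg m 1 - sg m' 1 :: 'k mpoly)"
    using ideal_mult[OF ideal_theta[OF j]] by simp
  then show ?thesis using dm' dec by blast
qed

lemma cyc_all:
  assumes nA: "\<forall>j<f. p \<le> lk m (jm j, True) \<longrightarrow> r j \<le> lk m (j, True)"
    and j0: "j0 < f" "p \<le> lk m (j0, True)"
  shows "\<forall>j<f. p \<le> lk m (j, True)"
proof -
  have cyc: "p \<le> lk m ((j0 + k) mod f, True)" for k
  proof (induction k)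
    case 0 then show ?case using j0 by simp
  next
    case (Suc k)
    let ?j = "Suc (j0 + k) mod f"
    have lt: "?j < f" using f1 by simp
    have "jm ?j = (j0 + k) mod f" by (rule jm_succ)
    then have "r ?j \<le> lk m (?j, True)" using nA lt Suc.IH by simp
    moreover have "p \<le> r ?j" using rj lt by blast
    ultimately show ?case by simp
  qed
  show ?thesis
  proof (intro allI impI)
    fix j assume j: "j < f"
    have "(j0 + (f - j0 + j)) mod f = j" using j j0 by simp
    then show "p \<le> lk m (j, True)" using cyc[of "f - j0 + j"] by simp
  qed
qed

lemma mono_good_aux: "\<forall>m. dg f r m \<longrightarrow> (\<Sum>i<f. lk m (i, True)) = n \<longrightarrow> good (sg m 1 :: 'k mpoly)"
proof (induction n rule: less_induct)
  case (less n)
  show ?case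
  proof (intro allI impI)
    fix m assume dm: "dg f r m" and n: "(\<Sum>i<f. lk m (i, True)) = n"
    show "good (sg m 1 :: 'k mpoly)"
    proof (cases "\<exists>j<f. p \<le> lk m (jm j, True) \<and> lk m (j, True) < r j")
      case True
      then obtain j where "j < f" "p \<le> lk m (jm j, True)" "lk m (j, True) < r j" by blast
      from move_step[OF dm this] obtain m' where m': "dg f r m'"
        "(\<Sum>i<f. lk m' (i, True)) < (\<Sum>i<f. lk m (i, True))"
        "in_theta_ideal p f (sg m 1 - sg m' 1 :: 'k mpoly)" by blast
      have "good (sg m' 1 :: 'k mpoly)" using less.IH m'(1,2) n by blast
      then show ?thesis using good_of_ideal[OF m'(3)] by blast
    next
      case False
      then have nA: "\<forall>j<f. p \<le> lk m (jm j, True) \<longrightarrow> r j \<le> lk m (j, True)" by (auto simp: not_less)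
      show ?thesis
      proof (cases "\<forall>j<f. lk m (j, True) \<le> p - 1")
        case True then show ?thesis using canon_good[OF dm] by blast
      next
        case False
        then obtain j0 where j0: "j0 < f" "p \<le> lk m (j0, True)" using p2 by force
        have allp: "\<forall>j<f. p \<le> lk m (j, True)" by (rule cyc_all[OF nA j0])
        have "\<forall>j<f. lk m (j, True) = r j"
        proof (intro allI impI)
          fix j assume j: "j < f"
          have "r j \<le> lk m (j, True)" using nA allp jm_lt j by blast
          moreover have "lk m (j, True) \<le> r j" using dg_le[OF dm j] .
          ultimately show "lk m (j, True) = r j" by simp
        qed
        then show ?thesis by (rule allY_good[OF dm])
      qed
    qed
  qed
qed

lemma mono_good: "dg f r m \<Longrightarrow> good (sg m 1 :: 'k mpoly)"
  by (rule mono_good_aux[rule_format, OF _ refl])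

lemma all_good:
  assumes P: "(P :: 'k mpoly) \<in> tens f r"
  shows "good P"
proof -
  have gS: "good (\<Sum>m\<in>S. const (lk P m) * sg m 1)" if "S \<subseteq> ks P" for S
  proof -
    have "finite S" using that by (rule finite_subset) simp
    then show ?thesis using that
    proof (induction S rule: finite_induct)
      case empty then show ?case by (simp add: good_0)
    next
      case (insert m S)
      have "dg f r m" using P insert.prems by (simp add: tens_iff)
      then have g1: "good (const (lk P m) * sg m 1)" by (intro good_cmul mono_good)
      have "S \<subseteq> ks P" using insert.prems by simp
      then have g2: "good (\<Sum>m\<in>S. const (lk P m) * sg m 1)" by (rule insert.IH)
      have "(\<Sum>m\<in>insert m S. const (lk P m) * sg m 1) = const (lk P m) * sg m 1 + (\<Sum>m\<in>S. const (lk P m) * sg m 1)"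
        using insert(1,2) by (rule sum.insert)
      then show ?case using good_add[OF g1 g2] by simp
    qed
  qed
  have "P = (\<Sum>m\<in>ks P. sg m (lk P m))" by (rule mpoly_expand)
  also have "\<dots> = (\<Sum>m\<in>ks P. const (lk P m) * sg m 1)" by (intro sum.cong refl) (rule single_const)
  finally have exp: "P = (\<Sum>m\<in>ks P. const (lk P m) * sg m 1)" .
  show ?thesis by (subst exp) (rule gS[OF subset_refl])
qed

end

context setting
begin

lemma iota1_tens: "Q \<in> tens f (\<lambda>_. p - 1) \<Longrightarrow> iota1 p f r (Q :: 'k mpoly) \<in> tens f r"
  unfolding iota1_def lin_ext_def
proof (intro tens_sum tens_const_mult)
  fix m assume Q: "Q \<in> tens f (\<lambda>_. p - 1)" and mQ: "m \<in> ks Q"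
  then have dm: "dg f (\<lambda>_. p - 1) m" by (simp add: tens_iff)
  show "(if \<forall>j<f. lk m (j, True) = p - 1 then \<Prod>j<f. Yv j ^ r j
        else \<Prod>j<f. Xv j ^ (r j - lk m (j, True)) * Yv j ^ lk m (j, True)) \<in> (tens f r :: 'k mpoly set)"
  proof (cases "\<forall>j<f. lk m (j, True) = p - 1")
    case True
    have "(\<Prod>j<f. Yv j ^ r j) = (\<Prod>j<f. Xv j ^ 0 * Yv j ^ r j :: 'k mpoly)" by simp
    also have "\<dots> \<in> tens f r" by (rule tens_monoXY) simp
    finally show ?thesis unfolding if_P[OF True] .
  next
    case False
    have "(\<Prod>j<f. Xv j ^ (r j - lk m (j, True)) * Yv j ^ lk m (j, True) :: 'k mpoly) \<in> tens f r"
    proof (rule tens_monoXY)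
      fix j assume j: "j < f"
      have "lk m (j, True) \<le> p - 1" using dg_le[OF dm j] by simp
      moreover have "p \<le> r j" using rj j by blast
      ultimately show "r j - lk m (j, True) + lk m (j, True) = r j" by simp
    qed
    then show ?thesis unfolding if_not_P[OF False] .
  qed
qed

lemma iota0_tens: "Q \<in> tens f (\<lambda>_. 0) \<Longrightarrow> iota0 p f r (Q :: 'k mpoly) \<in> tens f r"
  unfolding iota0_def lin_ext_def
proof (intro tens_sum tens_const_mult tens_add tens_diff)
  have "(\<Prod>j<f. Xv j ^ r j) = (\<Prod>j<f. Xv j ^ r j * Yv j ^ 0 :: 'k mpoly)" by simp
  also have "\<dots> \<in> tens f r" by (rule tens_monoXY) simp
  finally show "(\<Prod>j<f. Xv j ^ r j :: 'k mpoly) \<in> tens f r" .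
  have "(\<Prod>j<f. Yv j ^ r j) = (\<Prod>j<f. Xv j ^ 0 * Yv j ^ r j :: 'k mpoly)" by simp
  also have "\<dots> \<in> tens f r" by (rule tens_monoXY) simp
  finally show "(\<Prod>j<f. Yv j ^ r j :: 'k mpoly) \<in> tens f r" .
  show "(\<Prod>j<f. Xv j ^ (r j - (p - 1)) * Yv j ^ (p - 1) :: 'k mpoly) \<in> tens f r"
  proof (rule tens_monoXY)
    fix j assume j: "j < f"
    have "p \<le> r j" using rj j by blast
    then show "r j - (p - 1) + (p - 1) = r j" by simp
  qed
qed

lemma ev_iota:
  assumes Q0: "Q0 \<in> tens f (\<lambda>_. 0)" and Q1: "Q1 \<in> tens f (\<lambda>_. p - 1)"
    and x: "x \<in> Fq q" and y: "y \<in> Fq q" and nz: "\<not> (x = 0 \<and> y = 0)"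
  shows "ev (tp p f x y) (iota0 p f r Q0 + iota1 p f r Q1) = lk Q0 0 + ev (tp p f x y) (Q1 :: 'k mpoly)"
proof -
  have "ev (tp p f x y) Q0 = lk Q0 0" by (subst tens0_const[OF Q0]) simp
  then show ?thesis using L0[OF Q0 x y nz] L1[OF Q1 x y nz] by (simp add: ev_add)
qed

lemma inj_core:
  assumes Q0: "Q0 \<in> tens f (\<lambda>_. 0)" and Q1: "Q1 \<in> tens f (\<lambda>_. p - 1)"
    and H: "\<forall>t\<in>Fq q. ev (tp p f 1 t) (iota0 p f r Q0 + iota1 p f r Q1) = (0::'k)"
    and H2: "ev (tp p f 0 1) (iota0 p f r Q0 + iota1 p f r Q1) = (0::'k)"
  shows "Q0 = 0 \<and> Q1 = 0"
proof -
  have "\<forall>t\<in>Fq q. lk Q0 0 + ev (tp p f 1 t) Q1 = 0"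
    using H ev_iota[OF Q0 Q1 Fq_1] by simp
  moreover have "lk Q0 0 + ev (tp p f 0 1) Q1 = 0"
    using H2 ev_iota[OF Q0 Q1 Fq_0 Fq_1] by simp
  ultimately have "lk Q0 0 = 0 \<and> Q1 = 0" by (rule core[OF Q1])
  moreover have "Q0 = const (lk Q0 0)" by (rule tens0_const[OF Q0])
  ultimately show ?thesis by simp
qed

lemma injective:
  assumes Q0: "Q0 \<in> tens f (\<lambda>_. 0)" and Q1: "Q1 \<in> tens f (\<lambda>_. p - 1)"
    and I: "in_theta_ideal p f (iota0 p f r Q0 + iota1 p f r Q1 :: 'k mpoly)"
  shows "Q0 = 0 \<and> Q1 = 0"
  using inj_core[OF Q0 Q1] ideal_ev[OF _ _ I] Fq_0 Fq_1 by blast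

lemma crit:
  assumes P: "(P :: 'k mpoly) \<in> tens f r"
    and H: "\<forall>t\<in>Fq q. ev (tp p f 1 t) P = 0" and H2: "ev (tp p f 0 1) P = 0"
  shows "in_theta_ideal p f P"
proof -
  obtain Q0 Q1 where Q0: "Q0 \<in> tens f (\<lambda>_. 0)" and Q1: "Q1 \<in> tens f (\<lambda>_. p - 1)"
    and I: "in_theta_ideal p f (P - (iota0 p f r Q0 + iota1 p f r Q1))"
    using all_good[OF P] unfolding good_def by blast
  have "\<forall>t\<in>Fq q. ev (tp p f 1 t) (iota0 p f r Q0 + iota1 p f r Q1) = 0"
  proof
    fix t :: 'k assume t: "t \<in> Fq q"
    have "ev (tp p f 1 t) (P - (iota0 p f r Q0 + iota1 p f r Q1)) = 0" by (rule ideal_ev[OF Fq_1 t I])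
    then show "ev (tp p f 1 t) (iota0 p f r Q0 + iota1 p f r Q1) = 0" using H t by (simp add: ev_diff)
  qed
  moreover have "ev (tp p f 0 1) (iota0 p f r Q0 + iota1 p f r Q1) = 0"
  proof -
    have "ev (tp p f 0 1) (P - (iota0 p f r Q0 + iota1 p f r Q1)) = 0" by (rule ideal_ev[OF Fq_0 Fq_1 I])
    then show ?thesis using H2 by (simp add: ev_diff)
  qed
  ultimately have "Q0 = 0 \<and> Q1 = 0" by (rule inj_core[OF Q0 Q1])
  then show ?thesis using I by (simp add: iota0_def iota1_def)
qed

lemma crit2:
  assumes P: "(P :: 'k mpoly) \<in> tens f r"
    and H: "\<And>x y. x \<in> Fq q \<Longrightarrow> y \<in> Fq q \<Longrightarrow> \<not> (x = 0 \<and> y = 0) \<Longrightarrow> ev (tp p f x y) P = 0"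
  shows "in_theta_ideal p f P"
  by (rule crit[OF P]) (auto intro!: H Fq_0 Fq_1)

lemma gl_nz:
  assumes det: "a * d - b * c \<noteq> (0::'k)" and nz: "\<not> (x = 0 \<and> y = 0)"
  shows "\<not> (a * x + c * y = 0 \<and> b * x + d * y = 0)"
proof
  assume h: "a * x + c * y = 0 \<and> b * x + d * y = 0"
  have "x * (a * d - b * c) = d * (a * x + c * y) - c * (b * x + d * y)" by (simp add: algebra_simps)
  then have "x = 0" using h det by simp
  have "y * (a * d - b * c) = a * (b * x + d * y) - b * (a * x + c * y)" by (simp add: algebra_simps)
  then have "y = 0" using h det by simp
  then show False using \<open>x = 0\<close> nz by simp
qed

lemma equiv1:
  assumes g: "a \<in> Fq q" "b \<in> Fq q" "c \<in> Fq q" "d \<in> Fq q" "a * d - b * c \<noteq> (0::'k)"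
    and Q: "Q \<in> tens f (\<lambda>_. p - 1)"
  shows "in_theta_ideal p f (act p f a b c d (iota1 p f r Q) - iota1 p f r (act p f a b c d (Q :: 'k mpoly)))"
proof (rule crit2)
  show "act p f a b c d (iota1 p f r Q) - iota1 p f r (act p f a b c d Q) \<in> tens f r"
    by (intro tens_diff act_tens iota1_tens Q)
  fix x y :: 'k assume x: "x \<in> Fq q" and y: "y \<in> Fq q" and nz: "\<not> (x = 0 \<and> y = 0)"
  have pc: "prime CHAR('k)" "p = CHAR('k)" using pr ch by auto
  have gx: "a * x + c * y \<in> Fq q" "b * x + d * y \<in> Fq q" using g x y by (auto intro!: Fq_add Fq_mult)
  have gnz: "\<not> (a * x + c * y = 0 \<and> b * x + d * y = 0)" by (rule gl_nz[OF g(5) nz])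
  have "ev (tp p f x y) (act p f a b c d (iota1 p f r Q)) = ev (tp p f x y) (act p f a b c d Q)"
    unfolding evp_act[OF pc] L1[OF Q gx gnz] ..
  moreover have "ev (tp p f x y) (iota1 p f r (act p f a b c d Q)) = ev (tp p f x y) (act p f a b c d Q)"
    by (rule L1[OF act_tens[OF Q] x y nz])
  ultimately show "ev (tp p f x y) (act p f a b c d (iota1 p f r Q) - iota1 p f r (act p f a b c d Q)) = 0"
    by (simp add: ev_diff)
qed

lemma equiv0:
  assumes g: "a \<in> Fq q" "b \<in> Fq q" "c \<in> Fq q" "d \<in> Fq q" "a * d - b * c \<noteq> (0::'k)"
    and Q: "Q \<in> tens f (\<lambda>_. 0)"
  shows "in_theta_ideal p f (act p f a b c d (iota0 p f r Q) - iota0 p f r (act p f a b c d (Q :: 'k mpoly)))"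
proof (rule crit2)
  show "act p f a b c d (iota0 p f r Q) - iota0 p f r (act p f a b c d Q) \<in> tens f r"
    by (intro tens_diff act_tens iota0_tens Q)
  fix x y :: 'k assume x: "x \<in> Fq q" and y: "y \<in> Fq q" and nz: "\<not> (x = 0 \<and> y = 0)"
  have pc: "prime CHAR('k)" "p = CHAR('k)" using pr ch by auto
  have gx: "a * x + c * y \<in> Fq q" "b * x + d * y \<in> Fq q" using g x y by (auto intro!: Fq_add Fq_mult)
  have gnz: "\<not> (a * x + c * y = 0 \<and> b * x + d * y = 0)" by (rule gl_nz[OF g(5) nz])
  have "ev (tp p f x y) (act p f a b c d (iota0 p f r Q)) = ev (tp p f x y) (act p f a b c d Q)"
    unfolding evp_act[OF pc] L0[OF Q gx gnz] ..
  moreover have "ev (tp p f x y) (iota0 p f r (act p f a b c d Q)) = ev (tp p f x y) (act p f a b c d Q)"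
    by (rule L0[OF act_tens[OF Q] x y nz])
  ultimately show "ev (tp p f x y) (act p f a b c d (iota0 p f r Q) - iota0 p f r (act p f a b c d Q)) = 0"
    by (simp add: ev_diff)
qed

end

theorem proposition1:
  fixes p f q :: nat and r :: "nat \<Rightarrow> nat"
    and k_type :: "'k::field itself"
  assumes "prime p" and "2 \<le> f" and "q = p ^ f"
    and "\<forall>j<f. q \<le> r j"
    and "(q - 1) dvd (\<Sum>j<f. r j * p ^ j)"
    and "CHAR('k) = p"
    and "\<forall>P :: 'k poly. 0 < degree P \<longrightarrow> (\<exists>x. poly P x = 0)"
    and "\<forall>x :: 'k. \<exists>n>0. x ^ (p ^ n) = x"
  shows
    "(\<forall>Q\<in>(tens f (\<lambda>_. 0) :: 'k mpoly set). iota0 p f r Q \<in> tens f r)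
   \<and> (\<forall>Q\<in>(tens f (\<lambda>_. p - 1) :: 'k mpoly set). iota1 p f r Q \<in> tens f r)
   \<and> (\<forall>(a, b, c, d) \<in> (GL2 q :: ('k \<times> 'k \<times> 'k \<times> 'k) set).
        (\<forall>Q\<in>tens f (\<lambda>_. 0).
           in_theta_ideal p f (act p f a b c d (iota0 p f r Q) - iota0 p f r (act p f a b c d Q)))
      \<and> (\<forall>Q\<in>tens f (\<lambda>_. p - 1).
           in_theta_ideal p f (act p f a b c d (iota1 p f r Q) - iota1 p f r (act p f a b c d Q))))
   \<and> (\<forall>Q0\<in>(tens f (\<lambda>_. 0) :: 'k mpoly set). \<forall>Q1\<in>tens f (\<lambda>_. p - 1).
        in_theta_ideal p f (iota0 p f r Q0 + iota1 p f r Q1) \<longrightarrow> Q0 = 0 \<and> Q1 = 0)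
   \<and> (\<forall>P\<in>(tens f r :: 'k mpoly set). \<exists>Q0\<in>tens f (\<lambda>_. 0). \<exists>Q1\<in>tens f (\<lambda>_. p - 1).
        in_theta_ideal p f (P - (iota0 p f r Q0 + iota1 p f r Q1)))"
proof -
  interpret S: setting p f q r k_type using assms by unfold_locales auto
  show ?thesis
  proof (intro conjI)
    show "\<forall>Q\<in>(tens f (\<lambda>_. 0) :: 'k mpoly set). iota0 p f r Q \<in> tens f r"
      using S.iota0_tens by blast
    show "\<forall>Q\<in>(tens f (\<lambda>_. p - 1) :: 'k mpoly set). iota1 p f r Q \<in> tens f r"
      using S.iota1_tens by blast
    show "\<forall>(a, b, c, d) \<in> (GL2 q :: ('k \<times> 'k \<times> 'k \<times> 'k) set).
        (\<forall>Q\<in>tens f (\<lambda>_. 0).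
           in_theta_ideal p f (act p f a b c d (iota0 p f r Q) - iota0 p f r (act p f a b c d Q)))
      \<and> (\<forall>Q\<in>tens f (\<lambda>_. p - 1).
           in_theta_ideal p f (act p f a b c d (iota1 p f r Q) - iota1 p f r (act p f a b c d Q)))"
    proof (rule ballI)
      fix g :: "'k \<times> 'k \<times> 'k \<times> 'k" assume g: "g \<in> GL2 q"
      obtain a b c d where gd: "g = (a, b, c, d)" by (cases g)
      have h: "a \<in> Fq q" "b \<in> Fq q" "c \<in> Fq q" "d \<in> Fq q" "a * d - b * c \<noteq> 0"
        using g gd by (auto simp: GL2_def)
      have "(\<forall>Q\<in>tens f (\<lambda>_. 0).
           in_theta_ideal p f (act p f a b c d (iota0 p f r Q) - iota0 p f r (act p f a b c d Q)))
      \<and> (\<forall>Q\<in>tens f (\<lambda>_. p - 1).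
           in_theta_ideal p f (act p f a b c d (iota1 p f r Q) - iota1 p f r (act p f a b c d Q)))"
        using S.equiv0[OF h] S.equiv1[OF h] by blast
      then show "case g of (a, b, c, d) \<Rightarrow>
        (\<forall>Q\<in>tens f (\<lambda>_. 0).
           in_theta_ideal p f (act p f a b c d (iota0 p f r Q) - iota0 p f r (act p f a b c d Q)))
      \<and> (\<forall>Q\<in>tens f (\<lambda>_. p - 1).
           in_theta_ideal p f (act p f a b c d (iota1 p f r Q) - iota1 p f r (act p f a b c d Q)))"
        using gd by simp
    qed
    show "\<forall>Q0\<in>(tens f (\<lambda>_. 0) :: 'k mpoly set). \<forall>Q1\<in>tens f (\<lambda>_. p - 1).
        in_theta_ideal p f (iota0 p f r Q0 + iota1 p f r Q1) \<longrightarrow> Q0 = 0 \<and> Q1 = 0"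
      using S.injective by blast
    show "\<forall>P\<in>(tens f r :: 'k mpoly set). \<exists>Q0\<in>tens f (\<lambda>_. 0). \<exists>Q1\<in>tens f (\<lambda>_. p - 1).
        in_theta_ideal p f (P - (iota0 p f r Q0 + iota1 p f r Q1))"
      using S.all_good unfolding S.good_def by blast
  qed
qed

end
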